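(* Thompson's group $T$ has exponential conjugacy growth.
   Context: Let $\mathfrak{C}=\{0,1\}^\omega$ be the Cantor space with the product topology. For $w_1,w_2\in\{0,1\}^*$, a homeomorphism maps $w_1\mathfrak{C}$ rigidly to $w_2\mathfrak{C}$ if it restricts to $w_1y\mapsto w_2y$. Thompson's group $V$ is the group of homeomorphisms $v$ of $\mathfrak{C}$ such that every $x\in\mathfrak{C}$ lies in a cone $w\mathfrak{C}$ that $v$ maps rigidly onto some cone; Thompson's group $T\le V$ is the subgroup of those elements preserving the cyclic order on $\mathfrak{C}$ induced by the lexicographic order. $T$ is finitely generated. The conjugacy growth function of a finitely generated group with finite generating set $\Sigma$ sends $n$ to the number of conjugacy classes containing an element of word length at most $n$; exponential means it is equivalent to $n\mapsto 2^n$ under the relation $f\sim g$ iff $f\preccurlyeq g$ and $g\preccurlyeq f$, where $f\preccurlyeq g$ means there is $\lambda\in\mathbb{N}\setminus\{0\}$ with $f(n)\le\lambda g(\lambda n+\lambda)+\lambda$ for all $n$ (this is independent of $\Sigma$). *)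

theory Defs
  imports "HOL-Analysis.Analysis"
begin

type_synonym cantor = "nat \<Rightarrow> bool"

definition cantor_top :: "cantor topology" where
  "cantor_top = product_topology (\<lambda>_. discrete_topology (UNIV :: bool set)) UNIV"

definition cat :: "bool list \<Rightarrow> cantor \<Rightarrow> cantor" where
  "cat w y = (\<lambda>n. if n < length w then w ! n else y (n - length w))"

definition cone :: "bool list \<Rightarrow> cantor set" where
  "cone w = range (cat w)"

definition maps_rigidly :: "(cantor \<Rightarrow> cantor) \<Rightarrow> bool list \<Rightarrow> bool list \<Rightarrow> bool" where
  "maps_rigidly v w1 w2 \<longleftrightarrow> (\<forall>y. v (cat w1 y) = cat w2 y)"

definition ThompsonV :: "(cantor \<Rightarrow> cantor) set" where
  "ThompsonV = {v. homeomorphic_map cantor_top cantor_top v \<and>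
      (\<forall>x. \<exists>w1 w2. x \<in> cone w1 \<and> maps_rigidly v w1 w2)}"

definition lex_less :: "cantor \<Rightarrow> cantor \<Rightarrow> bool" where
  "lex_less x y \<longleftrightarrow> (\<exists>n. (\<forall>i<n. x i = y i) \<and> \<not> x n \<and> y n)"

definition cyc :: "cantor \<Rightarrow> cantor \<Rightarrow> cantor \<Rightarrow> bool" where
  "cyc a b c \<longleftrightarrow> (lex_less a b \<and> lex_less b c) \<or> (lex_less b c \<and> lex_less c a)
                 \<or> (lex_less c a \<and> lex_less a b)"

definition ThompsonT :: "(cantor \<Rightarrow> cantor) set" where
  "ThompsonT = {v \<in> ThompsonV. \<forall>a b c. cyc a b c \<longrightarrow> cyc (v a) (v b) (v c)}"

definition words_over :: "('a \<Rightarrow> 'a) set \<Rightarrow> ('a \<Rightarrow> 'a) list set" where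
  "words_over S = lists (S \<union> inv ` S)"

definition eval_word :: "('a \<Rightarrow> 'a) list \<Rightarrow> 'a \<Rightarrow> 'a" where
  "eval_word ws = foldr (\<circ>) ws id"

definition generates :: "('a \<Rightarrow> 'a) set \<Rightarrow> ('a \<Rightarrow> 'a) set \<Rightarrow> bool" where
  "generates S G \<longleftrightarrow> S \<subseteq> G \<and> (\<forall>g\<in>G. \<exists>ws\<in>words_over S. eval_word ws = g)"

definition word_length :: "('a \<Rightarrow> 'a) set \<Rightarrow> ('a \<Rightarrow> 'a) \<Rightarrow> nat" where
  "word_length S g = (LEAST n. \<exists>ws\<in>words_over S. length ws = n \<and> eval_word ws = g)"

definition conj_class :: "('a \<Rightarrow> 'a) set \<Rightarrow> ('a \<Rightarrow> 'a) \<Rightarrow> ('a \<Rightarrow> 'a) set" where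
  "conj_class G g = {h \<circ> g \<circ> inv h | h. h \<in> G}"

definition conj_growth :: "('a \<Rightarrow> 'a) set \<Rightarrow> ('a \<Rightarrow> 'a) set \<Rightarrow> nat \<Rightarrow> nat" where
  "conj_growth G S n = card {conj_class G g | g. g \<in> G \<and> word_length S g \<le> n}"

definition growth_le :: "(nat \<Rightarrow> nat) \<Rightarrow> (nat \<Rightarrow> nat) \<Rightarrow> bool" where
  "growth_le f g \<longleftrightarrow> (\<exists>c::nat. c \<noteq> 0 \<and> (\<forall>n. f n \<le> c * g (c * n + c) + c))"

definition growth_equiv :: "(nat \<Rightarrow> nat) \<Rightarrow> (nat \<Rightarrow> nat) \<Rightarrow> bool" where
  "growth_equiv f g \<longleftrightarrow> growth_le f g \<and> growth_le g f"

end

theory Submission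
  imports Defs
begin

definition sh :: "nat \<Rightarrow> cantor \<Rightarrow> cantor" where
  "sh k x = (\<lambda>n. x (n + k))"

lemma cone_iff: "x \<in> cone w \<longleftrightarrow> (\<forall>i<length w. x i = w ! i)"
proof
  assume "x \<in> cone w" then obtain y where "x = cat w y" by (auto simp: cone_def)
  then show "\<forall>i<length w. x i = w ! i" by (auto simp: cat_def)
next
  assume a: "\<forall>i<length w. x i = w ! i"
  have "x = cat w (sh (length w) x)"
    using a by (auto simp: cat_def sh_def fun_eq_iff)
  then show "x \<in> cone w" by (auto simp: cone_def)
qed

lemma cat_in_cone [simp]: "cat w y \<in> cone w"
  by (auto simp: cone_def)

lemma cat_sh: "x \<in> cone w \<Longrightarrow> cat w (sh (length w) x) = x"
  by (auto simp: cone_iff cat_def sh_def fun_eq_iff)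

lemma sh_cat [simp]: "sh (length w) (cat w y) = y"
  by (auto simp: cat_def sh_def fun_eq_iff)

lemma cat_inj [simp]: "cat w y = cat w z \<longleftrightarrow> y = z"
  by (metis sh_cat)

lemma cat_Nil [simp]: "cat [] y = y"
  by (auto simp: cat_def fun_eq_iff)

lemma cat_append: "cat (u @ v) y = cat u (cat v y)"
  by (auto simp: cat_def fun_eq_iff nth_append)

lemma cat_Cons: "cat (a # v) y = cat [a] (cat v y)"
  using cat_append[of "[a]" v y] by simp

lemma cone_Nil [simp]: "cone [] = UNIV"
  by (auto simp: cone_iff)

lemma cat_in_cone_append_iff [simp]: "cat w y \<in> cone (w @ v) \<longleftrightarrow> y \<in> cone v"
  by (auto simp: cone_iff cat_def nth_append)

lemma cone_append_sub: "cone (u @ v) \<subseteq> cone u"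
  by (auto simp: cone_iff nth_append)

lemma cat_eq_cat_prefix:
  assumes "cat p y = cat q z" "length p \<le> length q"
  shows "p = take (length p) q"
proof (rule nth_equalityI)
  show "length p = length (take (length p) q)" using assms by simp
  fix i assume "i < length p"
  then have "cat p y i = cat q z i" using assms by simp
  then show "p ! i = take (length p) q ! i" using \<open>i < length p\<close> assms
    by (auto simp: cat_def)
qed

lemma cones_meet_prefix:
  assumes "x \<in> cone p" "x \<in> cone q" "length p \<le> length q"
  shows "p = take (length p) q"
  using assms by (intro nth_equalityI) (auto simp: cone_iff)

lemma take_prefix_cone: "p = take (length p) q \<Longrightarrow> cone q \<subseteq> cone p"
  by (metis append_take_drop_id cone_append_sub)

lemma cones_meet_sub:
  assumes "x \<in> cone p" "x \<in> cone q" "length p \<le> length q"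
  shows "cone q \<subseteq> cone p"
  using cones_meet_prefix[OF assms] take_prefix_cone by blast

lemma cone_nonempty: "cone w \<noteq> {}"
  using cat_in_cone by blast

lemma cat_rigid_append:
  assumes "\<forall>y. f (cat p y) = cat q y"
  shows "f (cat (p @ r) y) = cat (q @ r) y"
  using assms by (simp add: cat_append)

lemma lex_less_irrefl [simp]: "\<not> lex_less x x"
  by (auto simp: lex_less_def)

lemma lex_less_trans:
  assumes "lex_less x y" "lex_less y z" shows "lex_less x z"
proof -
  obtain n where n: "\<forall>i<n. x i = y i" "\<not> x n" "y n" using assms(1) by (auto simp: lex_less_def)
  obtain m where m: "\<forall>i<m. y i = z i" "\<not> y m" "z m" using assms(2) by (auto simp: lex_less_def)
  have "n \<noteq> m" using n m by auto
  show ?thesis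
  proof (cases "n < m")
    case True
    then show ?thesis using n m unfolding lex_less_def
      by (intro exI[of _ n]) auto
  next
    case False
    then have "m < n" using \<open>n \<noteq> m\<close> by simp
    then show ?thesis using n m unfolding lex_less_def
      by (intro exI[of _ m]) auto
  qed
qed

lemma lex_less_asym: "lex_less x y \<Longrightarrow> \<not> lex_less y x"
  using lex_less_trans lex_less_irrefl by blast

lemma lex_less_total:
  assumes "x \<noteq> y" shows "lex_less x y \<or> lex_less y x"
proof -
  have "\<exists>i. x i \<noteq> y i" using assms by auto
  define n where "n = (LEAST i. x i \<noteq> y i)"
  have d: "x n \<noteq> y n" unfolding n_def by (rule LeastI_ex) fact
  have e: "\<forall>i<n. x i = y i" unfolding n_def using not_less_Least by blast
  show ?thesis using d e unfolding lex_less_def by (cases "x n") auto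
qed

lemma lex_less_cat [simp]: "lex_less (cat w y) (cat w z) \<longleftrightarrow> lex_less y z"
proof
  assume "lex_less (cat w y) (cat w z)"
  then obtain n where n: "\<forall>i<n. cat w y i = cat w z i" "\<not> cat w y n" "cat w z n"
    by (auto simp: lex_less_def)
  have "n \<ge> length w" using n by (auto simp: cat_def split: if_splits)
  have "\<forall>i<n - length w. y i = z i"
  proof (intro allI impI)
    fix i assume "i < n - length w"
    then have "cat w y (i + length w) = cat w z (i + length w)" using n(1) by auto
    then show "y i = z i" by (simp add: cat_def)
  qed
  then show "lex_less y z" unfolding lex_less_def using n \<open>n \<ge> length w\<close>
    by (intro exI[of _ "n - length w"]) (auto simp: cat_def)
next
  assume "lex_less y z"
  then obtain n where n: "\<forall>i<n. y i = z i" "\<not> y n" "z n"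
    by (auto simp: lex_less_def)
  show "lex_less (cat w y) (cat w z)" unfolding lex_less_def using n
    by (intro exI[of _ "n + length w"]) (auto simp: cat_def)
qed

lemma lex_less_split:
  assumes "x \<in> cone (w @ [False] @ p)" "y \<in> cone (w @ [True] @ q)"
  shows "lex_less x y"
  using assms unfolding lex_less_def cone_iff
  apply (intro exI[of _ "length w"])
  by (auto simp: nth_append)

lemma lex_less_split':
  assumes "x \<in> cone (w @ [False])" "y \<in> cone (w @ [True])"
  shows "lex_less x y"
  using lex_less_split[of x w "[]" y "[]"] assms by simp

definition zer :: cantor where "zer = (\<lambda>_. False)"
definition one :: cantor where "one = (\<lambda>_. True)"

lemma zer_least: "x \<noteq> zer \<Longrightarrow> lex_less zer x"
proof -
  assume "x \<noteq> zer"
  then have "lex_less zer x \<or> lex_less x zer" using lex_less_total by blast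
  moreover have "\<not> lex_less x zer" by (auto simp: lex_less_def zer_def)
  ultimately show ?thesis by blast
qed

lemma one_greatest: "x \<noteq> one \<Longrightarrow> lex_less x one"
proof -
  assume "x \<noteq> one"
  then have "lex_less one x \<or> lex_less x one" using lex_less_total by metis
  moreover have "\<not> lex_less one x" by (auto simp: lex_less_def one_def)
  ultimately show ?thesis by blast
qed

lemma not_cone_first_diff:
  assumes "p \<notin> cone w"
  shows "\<exists>i<length w. (\<forall>j<i. p j = w ! j) \<and> p i \<noteq> w ! i"
proof -
  have ex: "\<exists>i. i < length w \<and> p i \<noteq> w ! i" using assms by (auto simp: cone_iff)
  define i where "i = (LEAST i. i < length w \<and> p i \<noteq> w ! i)"
  have i: "i < length w \<and> p i \<noteq> w ! i" unfolding i_def by (rule LeastI_ex[OF ex])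
  have "\<forall>j<i. p j = w ! j"
  proof (intro allI impI)
    fix j assume "j < i"
    then have "\<not> (j < length w \<and> p j \<noteq> w ! j)" unfolding i_def using not_less_Least by blast
    then show "p j = w ! j" using \<open>j < i\<close> i by auto
  qed
  then show ?thesis using i by blast
qed

lemma cone_outside:
  assumes "p \<notin> cone w"
  shows "(\<forall>z\<in>cone w. lex_less p z) \<or> (\<forall>z\<in>cone w. lex_less z p)"
proof -
  obtain i where i: "i < length w" "\<forall>j<i. p j = w ! j" "p i \<noteq> w ! i"
    using not_cone_first_diff[OF assms] by blast
  show ?thesis
  proof (cases "p i")
    case True
    then have "\<forall>z\<in>cone w. lex_less z p" using i unfolding lex_less_def cone_iff
      by (intro ballI exI[of _ i]) (auto simp: cone_iff)
    then show ?thesis by blast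
  next
    case False
    then have "\<forall>z\<in>cone w. lex_less p z" using i unfolding lex_less_def cone_iff
      by (intro ballI exI[of _ i]) (auto simp: cone_iff)
    then show ?thesis by blast
  qed
qed

lemma cone_interval:
  assumes "x \<in> cone w" "y \<in> cone w" "lex_less x p" "lex_less p y"
  shows "p \<in> cone w"
  using cone_outside[of p w] assms lex_less_asym by blast

lemma cone_min: "z \<in> cone w \<Longrightarrow> z \<noteq> cat w zer \<Longrightarrow> lex_less (cat w zer) z"
  by (metis cat_sh lex_less_cat zer_least)

lemma cone_max: "z \<in> cone w \<Longrightarrow> z \<noteq> cat w one \<Longrightarrow> lex_less z (cat w one)"
  by (metis cat_sh lex_less_cat one_greatest)

lemma cyc_rot: "cyc a b c \<Longrightarrow> cyc b c a"
  by (auto simp: cyc_def)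

lemma cyc_distinct: "cyc a b c \<Longrightarrow> a \<noteq> b \<and> b \<noteq> c \<and> a \<noteq> c"
  by (auto simp: cyc_def dest: lex_less_asym)

lemma cyc_asym: "cyc a b c \<Longrightarrow> \<not> cyc a c b"
  unfolding cyc_def by (meson lex_less_asym lex_less_trans)

lemma cyc_total: "a \<noteq> b \<Longrightarrow> b \<noteq> c \<Longrightarrow> a \<noteq> c \<Longrightarrow> cyc a b c \<or> cyc a c b"
  unfolding cyc_def by (meson lex_less_total)

definition cyc_pres :: "(cantor \<Rightarrow> cantor) \<Rightarrow> bool" where
  "cyc_pres h \<longleftrightarrow> (\<forall>a b c. cyc a b c \<longrightarrow> cyc (h a) (h b) (h c))"

lemma cyc_pres_iff:
  assumes "inj h" "cyc_pres h"
  shows "cyc (h a) (h b) (h c) \<longleftrightarrow> cyc a b c"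
proof
  assume H: "cyc (h a) (h b) (h c)"
  then have "a \<noteq> b \<and> b \<noteq> c \<and> a \<noteq> c" using cyc_distinct by metis
  then have "cyc a b c \<or> cyc a c b" using cyc_total by blast
  moreover have "\<not> cyc a c b"
    using H assms(2) cyc_asym unfolding cyc_pres_def by blast
  ultimately show "cyc a b c" by blast
qed (use assms in \<open>auto simp: cyc_pres_def\<close>)

lemma mono_cyc_pres:
  assumes "\<And>x y. lex_less x y \<Longrightarrow> lex_less (f x) (f y)"
  shows "cyc_pres f"
  using assms unfolding cyc_pres_def cyc_def by blast

section \<open>Prefix replacement maps\<close>

definition cover :: "bool list list \<Rightarrow> cantor set" where
  "cover P = (\<Union>p\<in>set P. cone p)"

definition pf :: "bool list list \<Rightarrow> bool" where
  "pf P \<longleftrightarrow> distinct P \<and> (\<forall>p\<in>set P. \<forall>q\<in>set P. p \<noteq> q \<longrightarrow> cone p \<inter> cone q = {})"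

definition phi :: "bool list list \<Rightarrow> bool list list \<Rightarrow> cantor \<Rightarrow> cantor" where
  "phi P Q x = (if \<exists>pq\<in>set (zip P Q). x \<in> cone (fst pq)
     then (let pq = SOME pq. pq \<in> set (zip P Q) \<and> x \<in> cone (fst pq)
           in cat (snd pq) (sh (length (fst pq)) x))
     else x)"

definition pw :: "bool list \<Rightarrow> bool list list \<Rightarrow> bool list list" where
  "pw w P = map ((@) w) P"

lemma pw_Nil2 [simp]: "pw w [] = []" by (simp add: pw_def)
lemma pw_Nil [simp]: "pw [] P = P" by (induct P) (auto simp: pw_def)
lemma pw_pw [simp]: "pw u (pw v P) = pw (u @ v) P" by (simp add: pw_def)
lemma pw_append [simp]: "pw w (A @ B) = pw w A @ pw w B" by (simp add: pw_def)
lemma pw_Cons [simp]: "pw w (a # A) = (w @ a) # pw w A" by (simp add: pw_def)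
lemma pw_single [simp]: "pw w [[]] = [w]" by (simp add: pw_def)
lemma length_pw [simp]: "length (pw w P) = length P" by (simp add: pw_def)
lemma zip_pw: "zip (pw u P) (pw v Q) = map (\<lambda>(p,q). (u@p, v@q)) (zip P Q)"
  by (simp add: pw_def zip_map1 zip_map2 map_map o_def case_prod_beta)

lemma cover_append [simp]: "cover (A @ B) = cover A \<union> cover B"
  by (auto simp: cover_def)

lemma cover_Cons [simp]: "cover (a # B) = cone a \<union> cover B"
  by (auto simp: cover_def)

lemma cover_Nil [simp]: "cover [] = {}"
  by (auto simp: cover_def)

lemma mem_cover_pw: "x \<in> cover (pw w P) \<longleftrightarrow> x \<in> cone w \<and> sh (length w) x \<in> cover P"
proof
  assume "x \<in> cover (pw w P)"
  then obtain p where p: "p \<in> set P" "x \<in> cone (w @ p)" by (auto simp: cover_def pw_def)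
  then have "x \<in> cone w" using cone_append_sub by blast
  then have "x = cat w (sh (length w) x)" by (simp add: cat_sh)
  then have "sh (length w) x \<in> cone p" using p(2) by (metis cat_in_cone_append_iff)
  then show "x \<in> cone w \<and> sh (length w) x \<in> cover P" using p \<open>x \<in> cone w\<close> by (auto simp: cover_def)
next
  assume "x \<in> cone w \<and> sh (length w) x \<in> cover P"
  then obtain p where p: "p \<in> set P" "sh (length w) x \<in> cone p" "x \<in> cone w" by (auto simp: cover_def)
  then have "x \<in> cone (w @ p)" by (metis cat_in_cone_append_iff cat_sh)
  then show "x \<in> cover (pw w P)" using p by (auto simp: cover_def pw_def)
qed

lemma cover_pw_sub: "cover (pw w P) \<subseteq> cone w"
  using mem_cover_pw by blast

lemma cat_mem_cover_pw [simp]: "cat w y \<in> cover (pw w P) \<longleftrightarrow> y \<in> cover P"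
  by (simp add: mem_cover_pw)

lemma pf_unique:
  assumes "pf P" "length P = length Q" "(p,q) \<in> set (zip P Q)" "(p',q') \<in> set (zip P Q)"
    "x \<in> cone p" "x \<in> cone p'"
  shows "p = p' \<and> q = q'"
proof -
  obtain i where i: "i < length P" "P ! i = p" "Q ! i = q" using assms(2,3) by (auto simp: in_set_zip)
  obtain j where j: "j < length P" "P ! j = p'" "Q ! j = q'" using assms(2,4) by (auto simp: in_set_zip)
  have "p = p'"
  proof (rule ccontr)
    assume "p \<noteq> p'"
    moreover have "p \<in> set P" "p' \<in> set P" using i j nth_mem by blast+
    ultimately have "cone p \<inter> cone p' = {}" using assms(1) unfolding pf_def by blast
    then show False using assms(5,6) by blast
  qed
  then have "i = j" using i j assms(1) unfolding pf_def by (metis nth_eq_iff_index_eq)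
  then show ?thesis using i j \<open>p = p'\<close> by simp
qed

lemma phi_rigid:
  assumes "pf P" "length P = length Q" "(p,q) \<in> set (zip P Q)"
  shows "phi P Q (cat p y) = cat q y"
proof -
  have ex: "\<exists>pq. pq \<in> set (zip P Q) \<and> cat p y \<in> cone (fst pq)"
    using assms(3) cat_in_cone by fastforce
  define pq where "pq = (SOME pq. pq \<in> set (zip P Q) \<and> cat p y \<in> cone (fst pq))"
  have pq: "pq \<in> set (zip P Q) \<and> cat p y \<in> cone (fst pq)" unfolding pq_def
    by (rule someI_ex[OF ex])
  have "fst pq = p \<and> snd pq = q"
    using pf_unique[OF assms(1,2), of "fst pq" "snd pq" p q "cat p y"] pq assms(3) by simp
  moreover have "phi P Q (cat p y) = cat (snd pq) (sh (length (fst pq)) (cat p y))"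
    unfolding phi_def pq_def using ex by (simp add: Let_def Bex_def)
  ultimately show ?thesis by simp
qed

lemma phi_rigid_nth:
  assumes "pf P" "length P = length Q" "i < length P"
  shows "phi P Q (cat (P ! i) y) = cat (Q ! i) y"
  using assms by (intro phi_rigid) (auto simp: in_set_zip)

lemma phi_out:
  assumes "x \<notin> cover P"
  shows "phi P Q x = x"
proof -
  have "\<not> (\<exists>pq\<in>set (zip P Q). x \<in> cone (fst pq))"
    using assms by (auto simp: cover_def dest: set_zip_leftD)
  then show ?thesis by (simp add: phi_def)
qed

lemma cover_zip:
  assumes "length P = length Q" "x \<in> cover P"
  shows "\<exists>p q. (p,q) \<in> set (zip P Q) \<and> x \<in> cone p"
proof -
  obtain p where "p \<in> set P" "x \<in> cone p" using assms by (auto simp: cover_def)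
  then obtain i where "i < length P" "P ! i = p" by (auto simp: in_set_conv_nth)
  then show ?thesis using assms \<open>x \<in> cone p\<close> by (intro exI[of _ p] exI[of _ "Q ! i"]) (auto simp: in_set_zip)
qed

lemma phi_unique:
  assumes "pf P" "length P = length Q"
    "\<And>p q. (p,q) \<in> set (zip P Q) \<Longrightarrow> maps_rigidly f p q"
    "\<And>x. x \<notin> cover P \<Longrightarrow> f x = x"
  shows "phi P Q = f"
proof
  fix x
  show "phi P Q x = f x"
  proof (cases "x \<in> cover P")
    case True
    then obtain p q where pq: "(p,q) \<in> set (zip P Q)" "x \<in> cone p" using cover_zip assms(2) by blast
    then have x: "x = cat p (sh (length p) x)" by (simp add: cat_sh)
    have "phi P Q x = cat q (sh (length p) x)" by (subst x, rule phi_rigid[OF assms(1,2) pq(1)])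
    moreover have "f x = cat q (sh (length p) x)" using assms(3)[OF pq(1)] x
      unfolding maps_rigidly_def by metis
    ultimately show ?thesis by simp
  next
    case False
    then show ?thesis using assms(4) phi_out by simp
  qed
qed

lemma phi_rig:
  assumes "pf P" "length P = length Q" "(p,q) \<in> set (zip P Q)"
  shows "maps_rigidly (phi P Q) p q"
  using phi_rigid[OF assms] by (simp add: maps_rigidly_def)

lemma rig_append: "maps_rigidly f p q \<Longrightarrow> maps_rigidly f (p @ r) (q @ r)"
  by (simp add: maps_rigidly_def cat_append)

lemma phi_set_eq: "set (zip P Q) = set (zip P' Q') \<Longrightarrow> phi P Q = phi P' Q'"
  unfolding phi_def fun_eq_iff by simp

lemma zip_rotate1: "length P = length Q \<Longrightarrow> zip (rotate1 P) (rotate1 Q) = rotate1 (zip P Q)"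
  by (cases P; cases Q) auto

lemma zip_rotate: "length P = length Q \<Longrightarrow> zip (rotate k P) (rotate k Q) = rotate k (zip P Q)"
  by (induction k) (auto simp: zip_rotate1)

lemma phi_rotate: "length P = length Q \<Longrightarrow> phi (rotate k P) (rotate k Q) = phi P Q"
  by (rule phi_set_eq) (simp add: zip_rotate)

lemma pf_pw: "pf P \<Longrightarrow> pf (pw w P)"
proof -
  assume a: "pf P"
  have "distinct (pw w P)" using a by (auto simp: pf_def pw_def distinct_map inj_on_def)
  moreover have "cone p \<inter> cone q = {}" if "p \<in> set (pw w P)" "q \<in> set (pw w P)" "p \<noteq> q" for p q
  proof -
    note H = that
    obtain p' q' where pq: "p = w @ p'" "q = w @ q'" "p' \<in> set P" "q' \<in> set P" "p' \<noteq> q'"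
      using H by (auto simp: pw_def)
    then have d: "cone p' \<inter> cone q' = {}" using a by (auto simp: pf_def)
    show ?thesis
    proof (rule ccontr)
      assume "cone p \<inter> cone q \<noteq> {}"
      then obtain x where x: "x \<in> cone (w @ p')" "x \<in> cone (w @ q')" using pq by auto
      then have "x \<in> cone w" using cone_append_sub by blast
      then have "x = cat w (sh (length w) x)" by (simp add: cat_sh)
      then have "sh (length w) x \<in> cone p'" "sh (length w) x \<in> cone q'" using x
        by (metis cat_in_cone_append_iff)+
      then show False using d by blast
    qed
  qed
  ultimately show ?thesis by (auto simp: pf_def)
qed

lemma pf_append:
  assumes "pf A" "pf B" "cover A \<inter> cover B = {}"
  shows "pf (A @ B)"
proof -
  have "set A \<inter> set B = {}"
  proof (rule ccontr)
    assume "set A \<inter> set B \<noteq> {}"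
    then obtain p where "p \<in> set A" "p \<in> set B" by blast
    then have "cat p zer \<in> cover A \<inter> cover B" unfolding cover_def using cat_in_cone by blast
    then show False using assms(3) by blast
  qed
  then have "distinct (A @ B)" using assms by (auto simp: pf_def)
  moreover have "cone p \<inter> cone q = {}" if "p \<in> set (A @ B)" "q \<in> set (A @ B)" "p \<noteq> q" for p q
  proof -
    have "cone p \<subseteq> cover A \<and> p \<in> set A \<or> cone p \<subseteq> cover B \<and> p \<in> set B" using that by (auto simp: cover_def)
    moreover have "cone q \<subseteq> cover A \<and> q \<in> set A \<or> cone q \<subseteq> cover B \<and> q \<in> set B" using that by (auto simp: cover_def)
    ultimately show ?thesis using assms that unfolding pf_def by blast
  qed
  ultimately show ?thesis by (auto simp: pf_def)
qed

lemma pf_single [simp]: "pf [p]"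
  by (simp add: pf_def)

lemma phi_pw_in:
  assumes "pf P" "length P = length Q"
  shows "phi (pw w P) (pw w Q) (cat w y) = cat w (phi P Q y)"
proof (cases "y \<in> cover P")
  case True
  then obtain p q where pq: "(p,q) \<in> set (zip P Q)" "y \<in> cone p" using cover_zip assms(2) by blast
  then have y: "y = cat p (sh (length p) y)" by (simp add: cat_sh)
  have m: "(w @ p, w @ q) \<in> set (zip (pw w P) (pw w Q))" using pq(1) by (auto simp: zip_pw)
  have "phi (pw w P) (pw w Q) (cat w y) = phi (pw w P) (pw w Q) (cat (w @ p) (sh (length p) y))"
    by (subst y) (simp add: cat_append)
  also have "\<dots> = cat (w @ q) (sh (length p) y)"
    using phi_rigid[OF pf_pw[OF assms(1)] _ m] assms(2) by simp
  also have "\<dots> = cat w (phi P Q y)"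
    using phi_rigid[OF assms pq(1), of "sh (length p) y"] y by (simp add: cat_append)
  finally show ?thesis .
next
  case False
  then show ?thesis by (simp add: phi_out)
qed

lemma phi_pw_out:
  assumes "x \<notin> cone w"
  shows "phi (pw w P) (pw w Q) x = x"
  using assms cover_pw_sub phi_out by blast

lemma phi_id:
  assumes "pf P" shows "phi P P = id"
  using assms by (intro phi_unique) (auto simp: maps_rigidly_def in_set_zip)

lemma phi_comp:
  assumes "pf P" "pf Q" "length P = length Q" "length Q = length R" "cover Q \<subseteq> cover P"
  shows "phi Q R \<circ> phi P Q = phi P R"
proof (rule sym, rule phi_unique)
  show "pf P" by fact
  show "length P = length R" using assms by simp
next
  fix p r assume "(p, r) \<in> set (zip P R)"
  then obtain i where i: "i < length P" "P ! i = p" "R ! i = r" using assms by (auto simp: in_set_zip)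
  show "maps_rigidly (phi Q R \<circ> phi P Q) p r"
    unfolding maps_rigidly_def
  proof
    fix y
    have "phi P Q (cat (P ! i) y) = cat (Q ! i) y" using phi_rigid_nth[OF assms(1,3) i(1)] .
    moreover have "phi Q R (cat (Q ! i) y) = cat (R ! i) y" using phi_rigid_nth[OF assms(2,4)] i(1) assms(3) by simp
    ultimately show "(phi Q R \<circ> phi P Q) (cat p y) = cat r y" using i by simp
  qed
next
  fix x assume "x \<notin> cover P"
  then have "x \<notin> cover Q" using assms(5) by blast
  then show "(phi Q R \<circ> phi P Q) x = x" using \<open>x \<notin> cover P\<close> by (simp add: phi_out)
qed

lemma phi_inv:
  assumes "pf P" "pf Q" "length P = length Q" "cover P = cover Q"
  shows "inv (phi P Q) = phi Q P"
proof (rule inv_unique_comp)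
  have "phi P Q \<circ> phi Q P = phi Q Q"
    by (rule phi_comp[OF assms(2) assms(1) assms(3)[symmetric] assms(3)]) (use assms(4) in blast)
  then show "phi P Q \<circ> phi Q P = id" using phi_id[OF assms(2)] by simp
  have "phi Q P \<circ> phi P Q = phi P P"
    by (rule phi_comp[OF assms(1) assms(2) assms(3) assms(3)[symmetric]]) (use assms(4) in blast)
  then show "phi Q P \<circ> phi P Q = id" using phi_id[OF assms(1)] by simp
qed

lemma phi_comp_apply:
  assumes "pf P" "pf Q" "length P = length Q" "length Q = length R" "cover Q \<subseteq> cover P"
  shows "phi Q R (phi P Q x) = phi P R x"
  using phi_comp[OF assms] by (metis comp_apply)

section \<open>Complete prefix codes\<close>

inductive code :: "bool list list \<Rightarrow> bool" where
  code_leaf: "code [[]]"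
| code_node: "code P \<Longrightarrow> code Q \<Longrightarrow> code (pw [False] P @ pw [True] Q)"

lemma cone_at: "x \<in> cone (w @ [b] @ p) \<Longrightarrow> x (length w) = b"
  unfolding cone_iff by (drule spec[of _ "length w"]) (simp add: nth_append)

lemma cone_FT_disj: "cone (w @ [False] @ p) \<inter> cone (w @ [True] @ q) = {}"
  using cone_at[of _ w False p] cone_at[of _ w True q] by fastforce

lemma cover_pw_FT_disj: "cover (pw [False] P) \<inter> cover (pw [True] Q) = {}"
  using cone_FT_disj[of "[]"] by (auto simp: cover_def pw_def)

lemma code_cover: "code P \<Longrightarrow> cover P = UNIV"
proof (induction rule: code.induct)
  case code_leaf then show ?case by (simp add: cover_def)
next
  case (code_node P Q)
  have "x \<in> cover (pw [False] P @ pw [True] Q)" for x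
    using code_node by (cases "x 0") (auto simp: mem_cover_pw cone_iff)
  then show ?case by auto
qed

lemma code_pf: "code P \<Longrightarrow> pf P"
proof (induction rule: code.induct)
  case code_leaf then show ?case by simp
next
  case (code_node P Q)
  then show ?case using pf_append pf_pw cover_pw_FT_disj by blast
qed

lemma code_nonempty: "code P \<Longrightarrow> P \<noteq> []"
  by (induction rule: code.induct) (auto simp: pw_def)

definition slt :: "bool list \<Rightarrow> bool list \<Rightarrow> bool" where
  "slt p q \<longleftrightarrow> (\<forall>x\<in>cone p. \<forall>y\<in>cone q. lex_less x y)"

lemma slt_pw: "slt p q \<Longrightarrow> slt (w @ p) (w @ q)"
  unfolding slt_def
proof (intro ballI)
  fix x y assume s: "\<forall>x\<in>cone p. \<forall>y\<in>cone q. lex_less x y" and x: "x \<in> cone (w @ p)" and y: "y \<in> cone (w @ q)"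
  have xe: "x = cat w (sh (length w) x)" using x cone_append_sub[of w p] cat_sh[of x w] by auto
  have ye: "y = cat w (sh (length w) y)" using y cone_append_sub[of w q] cat_sh[of y w] by auto
  have "sh (length w) x \<in> cone p" using x xe by (metis cat_in_cone_append_iff)
  moreover have "sh (length w) y \<in> cone q" using y ye by (metis cat_in_cone_append_iff)
  ultimately have "lex_less (sh (length w) x) (sh (length w) y)" using s by blast
  then show "lex_less x y" using xe ye by (metis lex_less_cat)
qed

lemma code_sorted: "code P \<Longrightarrow> sorted_wrt slt P"
proof (induction rule: code.induct)
  case code_leaf then show ?case by simp
next
  case (code_node P Q)
  have "sorted_wrt slt (pw [False] P)" using code_node
    unfolding pw_def sorted_wrt_map by (metis (no_types, lifting) slt_pw sorted_wrt_mono_rel)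
  moreover have "sorted_wrt slt (pw [True] Q)" using code_node
    unfolding pw_def sorted_wrt_map by (metis (no_types, lifting) slt_pw sorted_wrt_mono_rel)
  moreover have "slt p q" if "p \<in> set (pw [False] P)" "q \<in> set (pw [True] Q)" for p q
    using that lex_less_split[of _ "[]"] by (auto simp: pw_def slt_def)
  ultimately show ?case by (auto simp: sorted_wrt_append)
qed

lemma code_phi_mono:
  assumes "code P" "code Q" "length P = length Q" "lex_less x y"
  shows "lex_less (phi P Q x) (phi P Q y)"
proof -
  have pfP: "pf P" using assms code_pf by blast
  have cP: "z \<in> cover P" for z using code_cover[OF assms(1)] by simp
  obtain i where i: "i < length P" "x \<in> cone (P ! i)"
    using cP[of x] unfolding cover_def by (metis UN_E in_set_conv_nth)
  obtain j where j: "j < length P" "y \<in> cone (P ! j)"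
    using cP[of y] unfolding cover_def by (metis UN_E in_set_conv_nth)
  have xe: "x = cat (P ! i) (sh (length (P ! i)) x)" using i by (simp add: cat_sh)
  have ye: "y = cat (P ! j) (sh (length (P ! j)) y)" using j by (simp add: cat_sh)
  have px: "phi P Q x = cat (Q ! i) (sh (length (P ! i)) x)"
    by (subst xe, rule phi_rigid_nth[OF pfP assms(3) i(1)])
  have py: "phi P Q y = cat (Q ! j) (sh (length (P ! j)) y)"
    by (subst ye, rule phi_rigid_nth[OF pfP assms(3) j(1)])
  have sP: "sorted_wrt slt P" and sQ: "sorted_wrt slt Q" using assms code_sorted by auto
  consider "i = j" | "i < j" | "j < i" by linarith
  then show ?thesis
  proof cases
    case 1
    then show ?thesis using assms(4) xe ye px py by (metis lex_less_cat)
  next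
    case 2
    then have "slt (Q ! i) (Q ! j)" using sQ j assms(3) by (simp add: sorted_wrt_iff_nth_less)
    then show ?thesis using px py by (simp add: slt_def)
  next
    case 3
    then have "slt (P ! j) (P ! i)" using sP i by (simp add: sorted_wrt_iff_nth_less)
    then have "lex_less y x" using i j by (simp add: slt_def)
    then show ?thesis using assms(4) lex_less_asym by blast
  qed
qed

section \<open>Topology of Cantor space\<close>

lemma topspace_cantor [simp]: "topspace cantor_top = UNIV"
  by (simp add: cantor_top_def PiE_UNIV_domain)

lemma open_coord: "openin cantor_top {x. x i = b}"
proof -
  have "continuous_map cantor_top (discrete_topology (UNIV::bool set)) (\<lambda>x. x i)"
    unfolding cantor_top_def by (rule continuous_map_product_projection) simp
  then have "openin cantor_top {x \<in> topspace cantor_top. x i \<in> {b}}"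
    by (rule openin_continuous_map_preimage) simp
  then show ?thesis by simp
qed

lemma open_cone: "openin cantor_top (cone w)"
proof -
  have "cone w = (\<Inter>i\<in>{..<length w}. {x. x i = w ! i}) \<inter> topspace cantor_top"
    by (auto simp: cone_iff)
  also have "openin cantor_top \<dots>"
    by (rule openin_INT) (auto simp: open_coord)
  finally show ?thesis .
qed

lemma compact_cantor: "compact_space cantor_top"
  unfolding cantor_top_def compact_space_product_topology
  by (simp add: compact_space_discrete_topology)

definition loc_rigid :: "(cantor \<Rightarrow> cantor) \<Rightarrow> bool" where
  "loc_rigid f \<longleftrightarrow> (\<forall>x. \<exists>w1 w2. x \<in> cone w1 \<and> maps_rigidly f w1 w2)"

definition pre :: "nat \<Rightarrow> cantor \<Rightarrow> bool list" where
  "pre k y = map y [0..<k]"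

lemma length_pre [simp]: "length (pre k y) = k" by (simp add: pre_def)

lemma in_cone_pre [simp]: "y \<in> cone (pre k y)"
  by (simp add: cone_iff pre_def)

lemma cont_rigid:
  assumes "loc_rigid f"
  shows "continuous_map cantor_top cantor_top f"
  unfolding cantor_top_def continuous_map_componentwise_UNIV
proof
  fix k
  show "continuous_map (product_topology (\<lambda>_. discrete_topology UNIV) UNIV)
          (discrete_topology UNIV) (\<lambda>x. f x k)"
    unfolding continuous_map_openin_preimage_eq cantor_top_def[symmetric]
  proof (intro conjI allI impI)
    fix U :: "bool set"
    show "openin cantor_top (topspace cantor_top \<inter> (\<lambda>x. f x k) -` U)"
    proof (subst openin_subopen, intro ballI)
      fix x assume x: "x \<in> topspace cantor_top \<inter> (\<lambda>x. f x k) -` U"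
      obtain w1 w2 where w: "x \<in> cone w1" "maps_rigidly f w1 w2" using assms unfolding loc_rigid_def by meson
      define y where "y = sh (length w1) x"
      have xe: "x = cat w1 y" using w(1) by (simp add: y_def cat_sh)
      define c where "c = w1 @ pre (k+1) y"
      have "x \<in> cone c" unfolding c_def xe by simp
      moreover have "cone c \<subseteq> topspace cantor_top \<inter> (\<lambda>x. f x k) -` U"
      proof
        fix z assume z: "z \<in> cone c"
        then have "z \<in> cone w1" unfolding c_def using cone_append_sub by blast
        then have ze: "z = cat w1 (sh (length w1) z)" by (simp add: cat_sh)
        have zz: "sh (length w1) z \<in> cone (pre (k+1) y)" using z ze unfolding c_def by (metis cat_in_cone_append_iff)
        then have agree: "\<forall>i<k+1. sh (length w1) z i = y i" by (auto simp: cone_iff pre_def simp del: upt_Suc)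
        have fz: "f z = cat w2 (sh (length w1) z)" using w(2) ze by (metis maps_rigidly_def)
        have fx: "f x = cat w2 y" using w(2) xe by (simp add: maps_rigidly_def)
        have "f z k = f x k" unfolding fz fx cat_def using agree by auto
        then show "z \<in> topspace cantor_top \<inter> (\<lambda>x. f x k) -` U" using x by auto
      qed
      ultimately show "\<exists>T. openin cantor_top T \<and> x \<in> T \<and> T \<subseteq> topspace cantor_top \<inter> (\<lambda>x. f x k) -` U"
        using open_cone by blast
    qed
  qed auto
qed

lemma inT_intro:
  assumes "loc_rigid f" "loc_rigid g" "\<And>x. g (f x) = x" "\<And>y. f (g y) = y" "cyc_pres f"
  shows "f \<in> ThompsonT"
proof -
  have "homeomorphic_maps cantor_top cantor_top f g"
    unfolding homeomorphic_maps_def using assms cont_rigid by auto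
  then have "homeomorphic_map cantor_top cantor_top f" by (rule homeomorphic_maps_imp_map)
  then show ?thesis using assms unfolding ThompsonT_def ThompsonV_def loc_rigid_def cyc_pres_def by auto
qed

lemma inT_bij: "f \<in> ThompsonT \<Longrightarrow> bij f"
  unfolding ThompsonT_def ThompsonV_def bij_def
  using homeomorphic_imp_surjective_map homeomorphic_imp_injective_map by fastforce

lemma inT_rigid: "f \<in> ThompsonT \<Longrightarrow> loc_rigid f"
  unfolding ThompsonT_def ThompsonV_def loc_rigid_def by auto

lemma inT_cyc: "f \<in> ThompsonT \<Longrightarrow> cyc_pres f"
  unfolding ThompsonT_def cyc_pres_def by auto

lemma loc_rigid_inv:
  assumes "loc_rigid f" "bij f"
  shows "loc_rigid (inv f)"
  unfolding loc_rigid_def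
proof
  fix y
  obtain w1 w2 where w: "inv f y \<in> cone w1" "maps_rigidly f w1 w2" using assms(1) unfolding loc_rigid_def by meson
  have "y = f (inv f y)" using assms(2) by (simp add: bij_is_surj surj_f_inv_f)
  also have "\<dots> = cat w2 (sh (length w1) (inv f y))" using w by (metis cat_sh maps_rigidly_def)
  finally have ye: "y = cat w2 (sh (length w1) (inv f y))" .
  have "y \<in> cone w2" by (subst ye) simp
  moreover have "maps_rigidly (inv f) w2 w1"
    unfolding maps_rigidly_def using w(2) assms(2)
    by (metis bij_is_inj inv_f_f maps_rigidly_def)
  ultimately show "\<exists>w1 w2. y \<in> cone w1 \<and> maps_rigidly (inv f) w1 w2" by blast
qed

lemma loc_rigid_comp:
  assumes "loc_rigid f" "loc_rigid g"
  shows "loc_rigid (f \<circ> g)"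
  unfolding loc_rigid_def
proof
  fix x
  obtain w1 w2 where w: "x \<in> cone w1" "maps_rigidly g w1 w2" using assms(2) unfolding loc_rigid_def by meson
  obtain w3 w4 where w': "g x \<in> cone w3" "maps_rigidly f w3 w4" using assms(1) unfolding loc_rigid_def by meson
  define y where "y = sh (length w1) x"
  have xe: "x = cat w1 y" using w(1) by (simp add: y_def cat_sh)
  define c where "c = pre (length w3) y"
  have gx: "g x = cat w2 y" using w(2) xe by (simp add: maps_rigidly_def)
  have "g x \<in> cone (w2 @ c)" unfolding gx c_def by simp
  moreover have "length w3 \<le> length (w2 @ c)" by (simp add: c_def)
  ultimately have pfx: "w3 = take (length w3) (w2 @ c)"
    using cones_meet_prefix[OF w'(1)] by blast
  define r where "r = drop (length w3) (w2 @ c)"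
  have split: "w2 @ c = w3 @ r" unfolding r_def using pfx by (metis append_take_drop_id)
  have "maps_rigidly (f \<circ> g) (w1 @ c) (w4 @ r)"
    unfolding maps_rigidly_def
  proof
    fix z
    have "g (cat (w1 @ c) z) = cat (w2 @ c) z" using w(2) by (simp add: maps_rigidly_def cat_append)
    also have "\<dots> = cat (w3 @ r) z" by (simp add: split)
    finally show "(f \<circ> g) (cat (w1 @ c) z) = cat (w4 @ r) z"
      using w'(2) by (simp add: maps_rigidly_def cat_append)
  qed
  moreover have "x \<in> cone (w1 @ c)" unfolding xe c_def by simp
  ultimately show "\<exists>w1 w2. x \<in> cone w1 \<and> maps_rigidly (f \<circ> g) w1 w2" by blast
qed

lemma cyc_pres_inv:
  assumes "cyc_pres f" "bij f"
  shows "cyc_pres (inv f)"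
  unfolding cyc_pres_def
proof (intro allI impI)
  fix a b c assume "cyc a b c"
  then have "cyc (f (inv f a)) (f (inv f b)) (f (inv f c))"
    using assms(2) by (simp add: bij_is_surj surj_f_inv_f)
  then show "cyc (inv f a) (inv f b) (inv f c)"
    using cyc_pres_iff[OF bij_is_inj[OF assms(2)] assms(1)] by blast
qed

lemma T_comp:
  assumes "f \<in> ThompsonT" "g \<in> ThompsonT"
  shows "f \<circ> g \<in> ThompsonT"
proof (rule inT_intro)
  have b: "bij f" "bij g" using assms inT_bij by auto
  show "loc_rigid (f \<circ> g)" using loc_rigid_comp assms inT_rigid by blast
  show "loc_rigid (inv g \<circ> inv f)" using loc_rigid_comp loc_rigid_inv assms inT_rigid b by blast
  show "(inv g \<circ> inv f) ((f \<circ> g) x) = x" for x using b by (simp add: bij_is_inj)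
  show "(f \<circ> g) ((inv g \<circ> inv f) y) = y" for y using b by (simp add: bij_is_surj surj_f_inv_f)
  show "cyc_pres (f \<circ> g)" using assms inT_cyc unfolding cyc_pres_def by auto
qed

lemma T_inv:
  assumes "f \<in> ThompsonT"
  shows "inv f \<in> ThompsonT"
proof (rule inT_intro)
  have b: "bij f" using assms inT_bij by auto
  show "loc_rigid (inv f)" using loc_rigid_inv assms inT_rigid b by blast
  show "loc_rigid f" using assms inT_rigid by blast
  show "f (inv f x) = x" for x using b by (simp add: bij_is_surj surj_f_inv_f)
  show "inv f (f y) = y" for y using b by (simp add: bij_is_inj)
  show "cyc_pres (inv f)" using cyc_pres_inv assms inT_cyc b by blast
qed

lemma T_id: "id \<in> ThompsonT"
proof (rule inT_intro)
  show "loc_rigid id" unfolding loc_rigid_def maps_rigidly_def by (auto intro: exI[of _ "[]"])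
  then show "loc_rigid id" .
qed (auto simp: cyc_pres_def)

lemma code_loc_rigid:
  assumes "code P" "length P = length Q"
  shows "loc_rigid (phi P Q)"
  unfolding loc_rigid_def
proof
  fix x
  have "x \<in> cover P" using code_cover[OF assms(1)] by simp
  then obtain p q where "(p,q) \<in> set (zip P Q)" "x \<in> cone p" using cover_zip assms(2) by blast
  then show "\<exists>w1 w2. x \<in> cone w1 \<and> maps_rigidly (phi P Q) w1 w2"
    using phi_rig[OF code_pf[OF assms(1)] assms(2)] by blast
qed

lemma phi_code_inverse:
  assumes "code P" "code Q" "length P = length Q"
  shows "phi Q P (phi P Q x) = x"
proof -
  have "phi Q P \<circ> phi P Q = phi P P"
    by (rule phi_comp) (use assms code_pf code_cover in auto)
  then show ?thesis using phi_id[OF code_pf[OF assms(1)]] by (metis comp_apply id_apply)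
qed

lemma code_phi_T:
  assumes "code P" "code Q" "length P = length Q" "cyc_pres (phi P Q)"
  shows "phi P Q \<in> ThompsonT"
  by (rule inT_intro[where g="phi Q P"])
     (use assms code_loc_rigid phi_code_inverse in auto)

lemma code_phi_T_mono:
  assumes "code P" "code Q" "length P = length Q"
  shows "phi P Q \<in> ThompsonT"
  using code_phi_T[OF assms] mono_cyc_pres code_phi_mono[OF assms] by blast

definition gen :: "('a \<Rightarrow> 'a) set \<Rightarrow> ('a \<Rightarrow> 'a) set" where
  "gen S = {eval_word ws | ws. ws \<in> words_over S}"

lemma eval_word_Nil [simp]: "eval_word [] = id"
  unfolding eval_word_def by (simp only: foldr_Nil id_apply)

lemma eval_word_Cons [simp]: "eval_word (a # ws) = a \<circ> eval_word ws"
  by (simp add: eval_word_def)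

lemma eval_word_append: "eval_word (xs @ ys) = eval_word xs \<circ> eval_word ys"
  by (induction xs) (auto simp: comp_assoc)

lemma words_over_append: "xs \<in> words_over S \<Longrightarrow> ys \<in> words_over S \<Longrightarrow> xs @ ys \<in> words_over S"
  by (simp add: words_over_def)

lemma gen_id: "id \<in> gen S"
  unfolding gen_def words_over_def by (intro CollectI exI[of _ "[]"]) simp

lemma gen_S: "s \<in> S \<Longrightarrow> s \<in> gen S"
  unfolding gen_def words_over_def by (intro CollectI exI[of _ "[s]"]) simp

lemma gen_invS: "s \<in> S \<Longrightarrow> inv s \<in> gen S"
  unfolding gen_def words_over_def by (intro CollectI exI[of _ "[inv s]"]) simp

lemma gen_comp: "f \<in> gen S \<Longrightarrow> g \<in> gen S \<Longrightarrow> f \<circ> g \<in> gen S"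
  unfolding gen_def by (auto simp flip: eval_word_append intro: words_over_append)

lemma eval_word_bij:
  assumes "\<And>s. s \<in> S \<Longrightarrow> bij s" "ws \<in> words_over S"
  shows "bij (eval_word ws)"
  using assms(2)
proof (induction ws)
  case Nil then show ?case by (metis eval_word_Nil bij_id)
next
  case (Cons a ws)
  have "a \<in> S \<union> inv ` S" "ws \<in> words_over S" using Cons.prems by (auto simp: words_over_def)
  then have "bij a" using assms(1) bij_imp_bij_inv by auto
  moreover have "bij (eval_word ws)" using Cons \<open>ws \<in> words_over S\<close> by blast
  ultimately show ?case unfolding eval_word_Cons by (rule bij_comp[rotated])
qed

lemma gen_bij: "(\<And>s. s \<in> S \<Longrightarrow> bij s) \<Longrightarrow> f \<in> gen S \<Longrightarrow> bij f"
  unfolding gen_def using eval_word_bij by blast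

lemma gen_inv:
  assumes "\<And>s. s \<in> S \<Longrightarrow> bij s" "f \<in> gen S"
  shows "inv f \<in> gen S"
proof -
  obtain ws where ws: "ws \<in> words_over S" "f = eval_word ws" using assms(2) by (auto simp: gen_def)
  have "inv (eval_word ws) \<in> gen S" using ws(1)
  proof (induction ws)
    case Nil then show ?case by (metis eval_word_Nil gen_id inv_id)
  next
    case (Cons a ws)
    have a: "a \<in> S \<union> inv ` S" and w: "ws \<in> words_over S" using Cons.prems by (auto simp: words_over_def)
    have ba: "bij a" using a assms(1) bij_imp_bij_inv by auto
    have bw: "bij (eval_word ws)" using eval_word_bij[OF assms(1) w] .
    have "inv a \<in> gen S"
    proof (cases "a \<in> S")
      case True then show ?thesis by (rule gen_invS)
    next
      case False
      then obtain s where "s \<in> S" "a = inv s" using a by auto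
      then show ?thesis using assms(1) by (simp add: inv_inv_eq gen_S)
    qed
    moreover have "inv (eval_word (a # ws)) = inv (eval_word ws) \<circ> inv a"
      using ba bw by (simp add: o_inv_distrib)
    moreover have "inv (eval_word ws) \<in> gen S" using Cons.IH w by blast
    ultimately show ?case by (metis gen_comp)
  qed
  then show ?thesis using ws by simp
qed

lemma gen_sub_T:
  assumes "S \<subseteq> ThompsonT"
  shows "gen S \<subseteq> ThompsonT"
proof
  fix f assume "f \<in> gen S"
  then obtain ws where ws: "ws \<in> words_over S" "f = eval_word ws" by (auto simp: gen_def)
  have "eval_word ws \<in> ThompsonT" using ws(1)
  proof (induction ws)
    case Nil then show ?case by (metis eval_word_Nil T_id)
  next
    case (Cons a ws)
    then have "a \<in> ThompsonT" using assms T_inv by (auto simp: words_over_def)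
    moreover have "eval_word ws \<in> ThompsonT" using Cons by (auto simp: words_over_def)
    ultimately show ?case by (metis T_comp eval_word_Cons)
  qed
  then show "f \<in> ThompsonT" using ws by simp
qed

definition X0P :: "bool list list" where "X0P = [[False],[True,False],[True,True]]"
definition X0Q :: "bool list list" where "X0Q = [[False,False],[False,True],[True]]"

definition Aw :: "bool list \<Rightarrow> cantor \<Rightarrow> cantor" where
  "Aw w = phi (pw w X0P) (pw w X0Q)"

definition x0 :: "cantor \<Rightarrow> cantor" where "x0 = Aw []"
definition x1 :: "cantor \<Rightarrow> cantor" where "x1 = Aw [True]"
definition c0 :: "cantor \<Rightarrow> cantor" where "c0 = phi [[False],[True]] [[True],[False]]"

definition S0 :: "(cantor \<Rightarrow> cantor) set" where "S0 = {x0, x1, c0}"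

lemma code_X0P: "code X0P"
proof -
  have "code (pw [False] [[]] @ pw [True] (pw [False] [[]] @ pw [True] [[]]))"
    by (intro code_node code_leaf)
  then show ?thesis by (simp add: X0P_def)
qed

lemma code_X0Q: "code X0Q"
proof -
  have "code (pw [False] (pw [False] [[]] @ pw [True] [[]]) @ pw [True] [[]])"
    by (intro code_node code_leaf)
  then show ?thesis by (simp add: X0Q_def)
qed

lemma code_FT: "code [[False],[True]]"
proof -
  have "code (pw [False] [[]] @ pw [True] [[]])" by (intro code_node code_leaf)
  then show ?thesis by simp
qed

lemma pf_X0P: "pf X0P" and pf_X0Q: "pf X0Q"
  using code_X0P code_X0Q code_pf by auto

lemma len_X0 [simp]: "length X0P = 3" "length X0Q = 3"
  by (simp_all add: X0P_def X0Q_def)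

lemma x0_T: "x0 \<in> ThompsonT"
  unfolding x0_def Aw_def using code_phi_T_mono[OF code_X0P code_X0Q] by simp

lemma x1_eq: "x1 = phi ([False] # pw [True] X0P) ([False] # pw [True] X0Q)"
proof (rule sym, rule phi_unique)
  show "pf ([False] # pw [True] X0P)"
    using code_pf[OF code_node[OF code_leaf code_X0P]] by simp
  show "length ([False] # pw [True] X0P) = length ([False] # pw [True] X0Q)" by simp
next
  fix p q assume "(p, q) \<in> set (zip ([False] # pw [True] X0P) ([False] # pw [True] X0Q))"
  then have "(p,q) = ([False],[False]) \<or> (p,q) \<in> set (zip (pw [True] X0P) (pw [True] X0Q))" by auto
  then show "maps_rigidly x1 p q"
  proof
    assume "(p,q) = ([False],[False])"
    then show ?thesis unfolding x1_def Aw_def maps_rigidly_def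
      by (auto intro!: phi_pw_out simp: cone_iff cat_def)
  next
    assume "(p,q) \<in> set (zip (pw [True] X0P) (pw [True] X0Q))"
    then show ?thesis unfolding x1_def Aw_def
      by (intro phi_rig pf_pw pf_X0P) auto
  qed
next
  fix x assume "x \<notin> cover ([False] # pw [True] X0P)"
  then have "x \<notin> cone [True]" using code_cover[OF code_X0P] by (auto simp: mem_cover_pw)
  then show "x1 x = x" unfolding x1_def Aw_def by (rule phi_pw_out)
qed

lemma x1_T: "x1 \<in> ThompsonT"
proof -
  have c1: "code ([False] # pw [True] X0P)" using code_node[OF code_leaf code_X0P] by simp
  have c2: "code ([False] # pw [True] X0Q)" using code_node[OF code_leaf code_X0Q] by simp
  show ?thesis unfolding x1_eq using code_phi_T_mono[OF c1 c2] by simp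
qed

definition flip :: "cantor \<Rightarrow> cantor" where "flip x = x(0 := \<not> x 0)"

lemma c0_flip: "c0 x = flip x"
proof -
  have x: "x = cat [x 0] (sh 1 x)" using cat_sh[of x "[x 0]"] by (simp add: cone_iff)
  have pf2: "pf [[False],[True]]" using code_pf[OF code_FT] .
  have "c0 (cat [x 0] (sh 1 x)) = cat [\<not> x 0] (sh 1 x)"
    unfolding c0_def by (cases "x 0") (auto intro!: phi_rigid[OF pf2])
  moreover have "flip x = cat [\<not> x 0] (sh 1 x)"
    by (auto simp: flip_def cat_def sh_def fun_eq_iff)
  ultimately show ?thesis using x by metis
qed

lemma lex_less_head:
  "lex_less x y \<longleftrightarrow> (\<not> x 0 \<and> y 0) \<or> (x 0 = y 0 \<and> lex_less (sh 1 x) (sh 1 y))"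
proof -
  have x: "x = cat [x 0] (sh 1 x)" using cat_sh[of x "[x 0]"] by (simp add: cone_iff)
  have y: "y = cat [y 0] (sh 1 y)" using cat_sh[of y "[y 0]"] by (simp add: cone_iff)
  show ?thesis
  proof (cases "x 0 = y 0")
    case True
    have xe: "x = cat [y 0] (sh 1 x)" by (subst True[symmetric]) (rule x)
    have "lex_less x y = lex_less (cat [y 0] (sh 1 x)) (cat [y 0] (sh 1 y))"
      by (rule arg_cong2[where f=lex_less, OF xe y])
    then show ?thesis using True by simp
  next
    case False
    show ?thesis
    proof (cases "x 0")
      case True
      then have "lex_less y x" using False lex_less_split'[of y "[]" x] by (simp add: cone_iff)
      then show ?thesis using True False lex_less_asym by blast
    next
      case F: False
      then have "lex_less x y" using False lex_less_split'[of x "[]" y] by (simp add: cone_iff)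
      then show ?thesis using F False by blast
    qed
  qed
qed

lemma flip_simps [simp]: "flip x 0 = (\<not> x 0)" "sh 1 (flip x) = sh 1 x"
  by (auto simp: flip_def sh_def fun_eq_iff)

lemma c0_cyc: "cyc_pres c0"
  unfolding cyc_pres_def c0_flip
proof (intro allI impI)
  fix a b c
  have h: "\<And>x y. lex_less (flip x) (flip y) \<longleftrightarrow> (x 0 \<and> \<not> y 0) \<or> (x 0 = y 0 \<and> lex_less (sh 1 x) (sh 1 y))"
    by (subst lex_less_head) (simp only: flip_simps, auto)
  note ab = lex_less_head[of a b] and bc = lex_less_head[of b c] and ca = lex_less_head[of c a]
  assume "cyc a b c"
  then show "cyc (flip a) (flip b) (flip c)"
    unfolding cyc_def h ab bc ca by blast
qed

lemma flip_flip [simp]: "flip (flip x) = x"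
  by (auto simp: flip_def)

lemma c0_rigid: "maps_rigidly c0 [b] [\<not> b]"
  unfolding maps_rigidly_def c0_flip by (auto simp: flip_def cat_def fun_eq_iff)

lemma c0_T: "c0 \<in> ThompsonT"
proof (rule inT_intro[where g=c0])
  show "loc_rigid c0" unfolding loc_rigid_def
  proof
    fix x show "\<exists>w1 w2. x \<in> cone w1 \<and> maps_rigidly c0 w1 w2"
      using c0_rigid[of "x 0"] by (intro exI[of _ "[x 0]"] exI[of _ "[\<not> x 0]"]) (auto simp: cone_iff)
  qed
  then show "loc_rigid c0" .
  show "c0 (c0 x) = x" for x by (simp add: c0_flip)
  show "c0 (c0 x) = x" for x by (simp add: c0_flip)
  show "cyc_pres c0" by (rule c0_cyc)
qed

lemma S0_T: "S0 \<subseteq> ThompsonT"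
  using x0_T x1_T c0_T by (auto simp: S0_def)

lemma S0_bij: "s \<in> S0 \<Longrightarrow> bij s"
  using S0_T inT_bij by blast

definition G0 where "G0 = gen S0"

lemma G0_T: "G0 \<subseteq> ThompsonT"
  unfolding G0_def using gen_sub_T[OF S0_T] .

lemma G0_comp: "f \<in> G0 \<Longrightarrow> g \<in> G0 \<Longrightarrow> f \<circ> g \<in> G0"
  unfolding G0_def by (rule gen_comp)

lemma G0_inv: "f \<in> G0 \<Longrightarrow> inv f \<in> G0"
  unfolding G0_def using gen_inv S0_bij by blast

lemma G0_id: "id \<in> G0"
  unfolding G0_def by (rule gen_id)

lemma G0_gens: "x0 \<in> G0" "x1 \<in> G0" "c0 \<in> G0"
  unfolding G0_def S0_def by (auto intro: gen_S)

lemma G0_bij: "f \<in> G0 \<Longrightarrow> bij f"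
  using G0_T inT_bij by blast

section \<open>Conjugating local maps\<close>

lemma rig_inv:
  assumes "bij g" "maps_rigidly g a b"
  shows "maps_rigidly (inv g) b a"
  using assms unfolding maps_rigidly_def by (metis bij_is_inj inv_f_f)

lemma conj_pw:
  assumes "bij g" "maps_rigidly g a b" "pf P" "length P = length Q"
  shows "g \<circ> phi (pw a P) (pw a Q) \<circ> inv g = phi (pw b P) (pw b Q)"
proof
  fix x
  show "(g \<circ> phi (pw a P) (pw a Q) \<circ> inv g) x = phi (pw b P) (pw b Q) x"
  proof (cases "x \<in> cone b")
    case True
    then have xe: "x = cat b (sh (length b) x)" by (simp add: cat_sh)
    have ig: "inv g (cat b y) = cat a y" for y using rig_inv[OF assms(1,2)] by (simp add: maps_rigidly_def)
    have "(g \<circ> phi (pw a P) (pw a Q) \<circ> inv g) (cat b (sh (length b) x)) = cat b (phi P Q (sh (length b) x))"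
      using ig phi_pw_in[OF assms(3,4)] assms(2) by (simp add: maps_rigidly_def)
    also have "\<dots> = phi (pw b P) (pw b Q) (cat b (sh (length b) x))"
      using phi_pw_in[OF assms(3,4)] by simp
    finally show ?thesis using xe by metis
  next
    case False
    have "inv g x \<notin> cone a"
    proof
      assume "inv g x \<in> cone a"
      then have "inv g x = cat a (sh (length a) (inv g x))" by (simp add: cat_sh)
      then have "g (inv g x) = cat b (sh (length a) (inv g x))" using assms(2) by (metis maps_rigidly_def)
      then have "x \<in> cone b" using assms(1) by (metis bij_inv_eq_iff cat_in_cone)
      then show False using False by simp
    qed
    then have "phi (pw a P) (pw a Q) (inv g x) = inv g x" by (rule phi_pw_out)
    then show ?thesis using False phi_pw_out[OF False] assms(1)
      by (simp add: bij_is_surj surj_f_inv_f)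
  qed
qed

lemma Aw_conj:
  assumes "g \<in> G0" "maps_rigidly g a b" "Aw (a @ z) \<in> G0"
  shows "Aw (b @ z) \<in> G0"
proof -
  have "g \<circ> Aw (a @ z) \<circ> inv g = Aw (b @ z)"
    unfolding Aw_def using conj_pw[OF G0_bij[OF assms(1)] rig_append[OF assms(2)] pf_X0P] by simp
  moreover have "g \<circ> Aw (a @ z) \<circ> inv g \<in> G0"
    using assms G0_comp G0_inv by blast
  ultimately show ?thesis by simp
qed

lemma x0_rig: "maps_rigidly x0 [False] [False,False]" "maps_rigidly x0 [True,False] [False,True]"
   "maps_rigidly x0 [True,True] [True]"
  unfolding x0_def Aw_def using phi_rig[OF pf_X0P] by (auto simp: X0P_def X0Q_def)

lemma Aw_all: "Aw (True # z) \<in> G0 \<and> Aw (False # z) \<in> G0"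
proof (induction z)
  case Nil
  have "Aw [True] \<in> G0" using G0_gens(2) by (simp add: x1_def)
  moreover have "Aw ([False] @ []) \<in> G0"
    by (rule Aw_conj[OF G0_gens(3) c0_rigid[of True, simplified]]) (use \<open>Aw [True] \<in> G0\<close> in simp)
  ultimately show ?case by simp
next
  case (Cons b z)
  have ix0: "inv x0 \<in> G0" using G0_inv G0_gens by blast
  have bx0: "bij x0" using G0_bij G0_gens by blast
  have TT: "Aw (True # True # z) \<in> G0"
    using Aw_conj[OF ix0 rig_inv[OF bx0 x0_rig(3)], of z] Cons by simp
  have FF: "Aw (False # False # z) \<in> G0"
    using Aw_conj[OF G0_gens(1) x0_rig(1), of z] Cons by simp
  have FT: "Aw (False # True # z) \<in> G0"
    using Aw_conj[OF G0_gens(3) c0_rigid[of True, simplified], of "True # z"] TT by simp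
  have TF: "Aw (True # False # z) \<in> G0"
    using Aw_conj[OF ix0 rig_inv[OF bx0 x0_rig(2)], of z] FT by simp
  show ?case using TT FF FT TF by (cases b) auto
qed

lemma Aw_G0: "Aw w \<in> G0"
proof (cases w)
  case Nil then show ?thesis using G0_gens(1) by (simp add: x0_def)
next
  case (Cons b z) then show ?thesis using Aw_all by (cases b) auto
qed

definition rigall :: "(cantor \<Rightarrow> cantor) \<Rightarrow> bool list list \<Rightarrow> bool list list \<Rightarrow> bool" where
  "rigall f P Q \<longleftrightarrow> (\<forall>(p,q)\<in>set (zip P Q). maps_rigidly f p q)"

lemma rigall_app:
  "length A = length C \<Longrightarrow> rigall f (A @ B) (C @ D) \<longleftrightarrow> rigall f A C \<and> rigall f B D"
  by (auto simp: rigall_def)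

lemma rigall_pw:
  assumes "maps_rigidly f u v" shows "rigall f (pw u V) (pw v V)"
  unfolding rigall_def zip_pw using rig_append[OF assms]
  by (auto simp: in_set_zip)

lemma rigall_phi: "pf P \<Longrightarrow> length P = length Q \<Longrightarrow> rigall (phi P Q) P Q"
  unfolding rigall_def using phi_rig by blast

lemma phi_unique':
  assumes "pf P" "length P = length Q" "rigall f P Q" "\<And>x. x \<notin> cover P \<Longrightarrow> f x = x"
  shows "phi P Q = f"
  using phi_unique[OF assms(1,2) _ assms(4)] assms(3) unfolding rigall_def by blast

lemma cover_pw_code: "code P \<Longrightarrow> cover (pw w P) = cone w"
  using mem_cover_pw code_cover by blast

lemma pf_rotate [simp]: "pf (rotate k X) = pf X"
  by (simp add: pf_def)

lemma pf_rotate1 [simp]: "pf (rotate1 X) = pf X"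
  by (simp add: pf_def)

lemma cover_rotate1 [simp]: "cover (rotate1 X) = cover X"
  by (simp add: cover_def)

lemma cover_rotate [simp]: "cover (rotate k X) = cover X"
  by (simp add: cover_def)

lemma pf_code_pw: "code P \<Longrightarrow> pf (pw w P)"
  using pf_pw code_pf by blast

lemma id_rig: "(\<And>y. f (cat p y) = cat p y) \<Longrightarrow> maps_rigidly f p p"
  by (simp add: maps_rigidly_def)

lemma cone_FT_disj': "x \<in> cone (w @ [False]) \<Longrightarrow> x \<notin> cone (w @ [True])"
  using cone_FT_disj[of w "[]" "[]"] by auto

fun vine :: "nat \<Rightarrow> bool list list" where
  "vine 0 = [[]]"
| "vine (Suc k) = pw [False] [[]] @ pw [True] (vine k)"

lemma code_vine: "code (vine k)"
proof (induction k)
  case 0 then show ?case by (simp add: code_leaf)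
next
  case (Suc k) then show ?case using code_node[OF code_leaf Suc.IH] by simp
qed

lemma length_vine [simp]: "length (vine k) = Suc k"
  by (induction k) auto

lemma code_length_pos: "code P \<Longrightarrow> length P > 0"
  using code_nonempty by blast

lemma W_lemma: "\<forall>w. phi (pw w (pw [False] (vine a) @ pw [True] (vine b))) (pw w (vine (Suc (a + b)))) \<in> G0"
proof (induction a)
  case 0
  have e: "pw [False] (vine 0) @ pw [True] (vine b) = vine (Suc b)" by simp
  show ?case
  proof
    fix w
    show "phi (pw w (pw [False] (vine 0) @ pw [True] (vine b))) (pw w (vine (Suc (0 + b)))) \<in> G0"
      unfolding e add_0 using phi_id[OF pf_code_pw[OF code_vine]] G0_id by metis
  qed
next
  case (Suc a)
  show ?case
  proof
    fix w
    define V1 where "V1 = vine a"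
    define V2 where "V2 = vine b"
    define Start where "Start = pw [False] (vine (Suc a)) @ pw [True] V2"
    define M' where "M' = pw [False] V1 @ pw [True] V2"
    define Mid where "Mid = pw [False] [[]] @ pw [True] M'"
    define T' where "T' = vine (Suc (a + b))"
    define Tg where "Tg = pw [False] [[]] @ pw [True] T'"
    have cStart: "code Start" unfolding Start_def V2_def by (intro code.intros code_vine)
    have cM': "code M'" unfolding M'_def V1_def V2_def by (intro code.intros code_vine)
    have cMid: "code Mid" unfolding Mid_def by (intro code.intros cM')
    have cT': "code T'" unfolding T'_def by (rule code_vine)
    have cTg: "code Tg" unfolding Tg_def by (intro code.intros cT')
    have Tg_eq: "Tg = vine (Suc (Suc a + b))" by (simp add: Tg_def T'_def)
    have lens: "length Start = length Mid" "length Mid = length Tg" "length M' = length T'"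
      by (simp_all add: Start_def Mid_def Tg_def M'_def T'_def V1_def V2_def)
    have s1: "phi (pw w Start) (pw w Mid) = phi (pw w X0Q) (pw w X0P)"
    proof (rule phi_unique')
      show "pf (pw w Start)" using pf_code_pw[OF cStart] .
      show "length (pw w Start) = length (pw w Mid)" using lens by simp
      have r: "maps_rigidly (phi (pw w X0Q) (pw w X0P)) p q" if "(q, p) \<in> set (zip (pw w X0P) (pw w X0Q))" for p q
        by (rule phi_rig[OF pf_code_pw[OF code_X0Q]]) (use that in \<open>auto simp: in_set_zip\<close>)
      have r1: "maps_rigidly (phi (pw w X0Q) (pw w X0P)) (w @ [False, False]) (w @ [False])"
        by (rule r) (simp add: X0P_def X0Q_def)
      have r2: "maps_rigidly (phi (pw w X0Q) (pw w X0P)) (w @ [False, True]) (w @ [True, False])"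
        by (rule r) (simp add: X0P_def X0Q_def)
      have r3: "maps_rigidly (phi (pw w X0Q) (pw w X0P)) (w @ [True]) (w @ [True, True])"
        by (rule r) (simp add: X0P_def X0Q_def)
      have eS: "pw w Start = pw (w @ [False, False]) [[]] @ pw (w @ [False, True]) V1 @ pw (w @ [True]) V2"
        by (simp add: Start_def V1_def)
      have eM: "pw w Mid = pw (w @ [False]) [[]] @ pw (w @ [True, False]) V1 @ pw (w @ [True, True]) V2"
        by (simp add: Mid_def M'_def)
      show "rigall (phi (pw w X0Q) (pw w X0P)) (pw w Start) (pw w Mid)"
        unfolding eS eM using rigall_pw[OF r1, of "[[]]"] rigall_pw[OF r2, of V1] rigall_pw[OF r3, of V2]
        by (simp only: rigall_app length_pw simp_thms)
      fix x assume "x \<notin> cover (pw w Start)"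
      then have "x \<notin> cone w" using cover_pw_code[OF cStart] by simp
      then show "phi (pw w X0Q) (pw w X0P) x = x" by (rule phi_pw_out)
    qed
    have "inv (Aw w) = phi (pw w X0Q) (pw w X0P)"
      unfolding Aw_def
      by (rule phi_inv) (simp_all add: pf_code_pw code_X0P code_X0Q cover_pw_code)
    then have g1: "phi (pw w Start) (pw w Mid) \<in> G0" using s1 G0_inv[OF Aw_G0, of w] by metis
    have s2: "phi (pw w Mid) (pw w Tg) = phi (pw (w @ [True]) M') (pw (w @ [True]) T')"
    proof (rule phi_unique')
      show "pf (pw w Mid)" using pf_code_pw[OF cMid] .
      show "length (pw w Mid) = length (pw w Tg)" using lens by simp
      have eM: "pw w Mid = pw (w @ [False]) [[]] @ pw (w @ [True]) M'" by (simp add: Mid_def)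
      have eT: "pw w Tg = pw (w @ [False]) [[]] @ pw (w @ [True]) T'" by (simp add: Tg_def)
      have a1: "maps_rigidly (phi (pw (w @ [True]) M') (pw (w @ [True]) T')) (w @ [False]) (w @ [False])"
        by (rule id_rig, rule phi_pw_out) (metis cat_in_cone cone_FT_disj' cat_append cone_append_sub subsetD)
      have a2: "rigall (phi (pw (w @ [True]) M') (pw (w @ [True]) T')) (pw (w @ [True]) M') (pw (w @ [True]) T')"
        using rigall_phi[OF pf_code_pw[OF cM']] lens by simp
      show "rigall (phi (pw (w @ [True]) M') (pw (w @ [True]) T')) (pw w Mid) (pw w Tg)"
        unfolding eM eT using rigall_pw[OF a1, of "[[]]"] a2 by (simp only: rigall_app length_pw simp_thms)
      fix x assume "x \<notin> cover (pw w Mid)"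
      then have "x \<notin> cone w" using cover_pw_code[OF cMid] by simp
      then have "x \<notin> cone (w @ [True])" using cone_append_sub by blast
      then show "phi (pw (w @ [True]) M') (pw (w @ [True]) T') x = x" by (rule phi_pw_out)
    qed
    have g2: "phi (pw w Mid) (pw w Tg) \<in> G0"
      using s2 spec[OF Suc.IH, of "w @ [True]"] unfolding M'_def T'_def V1_def V2_def by metis
    have "phi (pw w Mid) (pw w Tg) \<circ> phi (pw w Start) (pw w Mid) = phi (pw w Start) (pw w Tg)"
      by (rule phi_comp) (use lens pf_code_pw cStart cMid cover_pw_code in auto)
    then have "phi (pw w Start) (pw w Tg) \<in> G0" using g1 g2 G0_comp by metis
    then show "phi (pw w (pw [False] (vine (Suc a)) @ pw [True] (vine b))) (pw w (vine (Suc (Suc a + b)))) \<in> G0"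
      using Tg_eq by (simp add: Start_def V2_def)
  qed
qed

lemma code_to_vine: "code P \<Longrightarrow> \<forall>w. phi (pw w P) (pw w (vine (length P - 1))) \<in> G0"
proof (induction rule: code.induct)
  case code_leaf
  show ?case
  proof
    fix w
    have e: "pw w (vine (length [[]] - 1)) = [w]" "pw w [[]] = [w]" by simp_all
    show "phi (pw w [[]]) (pw w (vine (length [[]] - 1))) \<in> G0"
      unfolding e phi_id[OF pf_single] by (rule G0_id)
  qed
next
  case (code_node P Q)
  define a where "a = length P - 1"
  define b where "b = length Q - 1"
  have la: "length P = Suc a" using code_nonempty[OF code_node(1)] by (simp add: a_def)
  have lb: "length Q = Suc b" using code_nonempty[OF code_node(2)] by (simp add: b_def)
  show ?case
  proof
    fix w
    define N where "N = pw [False] P @ pw [True] Q"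
    define M where "M = pw [False] (vine a) @ pw [True] (vine b)"
    have cN: "code N" unfolding N_def using code_node by (intro code.intros)
    have cM: "code M" unfolding M_def by (intro code.intros code_vine)
    define h1 where "h1 = phi (pw (w @ [False]) P) (pw (w @ [False]) (vine a))"
    define h2 where "h2 = phi (pw (w @ [True]) Q) (pw (w @ [True]) (vine b))"
    have g1: "h1 \<in> G0" using spec[OF code_node(3), of "w @ [False]"] unfolding h1_def a_def by simp
    have g2: "h2 \<in> G0" using spec[OF code_node(4), of "w @ [True]"] unfolding h2_def b_def by simp
    have e1: "phi (pw w N) (pw w M) = h1 \<circ> h2"
    proof (rule phi_unique')
      show "pf (pw w N)" using pf_code_pw[OF cN] .
      show "length (pw w N) = length (pw w M)" using la lb by (simp add: N_def M_def)
      have eN: "pw w N = pw (w @ [False]) P @ pw (w @ [True]) Q" by (simp add: N_def)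
      have eM: "pw w M = pw (w @ [False]) (vine a) @ pw (w @ [True]) (vine b)" by (simp add: M_def)
      have r1: "rigall (h1 \<circ> h2) (pw (w @ [False]) P) (pw (w @ [False]) (vine a))"
        unfolding rigall_def
      proof (intro ballI, clarify)
        fix p q assume pq: "(p, q) \<in> set (zip (pw (w @ [False]) P) (pw (w @ [False]) (vine a)))"
        have "maps_rigidly h1 p q" unfolding h1_def
          by (rule phi_rig[OF pf_code_pw[OF code_node(1)]]) (use pq la in auto)
        moreover obtain r where r: "p = (w @ [False]) @ r" using pq by (auto simp: zip_pw in_set_zip pw_def)
        have "h2 (cat p y) = cat p y" for y
        proof -
          have "cat p y \<in> cone (w @ [False])" using r cone_append_sub cat_in_cone by blast
          then have "cat p y \<notin> cone (w @ [True])" by (rule cone_FT_disj')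
          then show ?thesis unfolding h2_def by (rule phi_pw_out)
        qed
        ultimately show "maps_rigidly (h1 \<circ> h2) p q" unfolding maps_rigidly_def by simp
      qed
      have r2: "rigall (h1 \<circ> h2) (pw (w @ [True]) Q) (pw (w @ [True]) (vine b))"
        unfolding rigall_def
      proof (intro ballI, clarify)
        fix p q assume pq: "(p, q) \<in> set (zip (pw (w @ [True]) Q) (pw (w @ [True]) (vine b)))"
        have "maps_rigidly h2 p q" unfolding h2_def
          by (rule phi_rig[OF pf_code_pw[OF code_node(2)]]) (use pq lb in auto)
        moreover obtain r where r: "q = (w @ [True]) @ r" using pq by (auto simp: zip_pw in_set_zip pw_def)
        have "h1 (cat q y) = cat q y" for y
        proof -
          have "cat q y \<in> cone (w @ [True])" using r cone_append_sub cat_in_cone by blast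
          then have "cat q y \<notin> cone (w @ [False])" using cone_FT_disj' by blast
          then show ?thesis unfolding h1_def by (rule phi_pw_out)
        qed
        ultimately show "maps_rigidly (h1 \<circ> h2) p q" unfolding maps_rigidly_def by simp
      qed
      show "rigall (h1 \<circ> h2) (pw w N) (pw w M)"
        unfolding eN eM using r1 r2 la by (simp only: rigall_app length_pw length_vine)
      fix x assume "x \<notin> cover (pw w N)"
      then have "x \<notin> cone w" using cover_pw_code[OF cN] by simp
      then have "x \<notin> cone (w @ [False])" "x \<notin> cone (w @ [True])" using cone_append_sub by blast+
      then show "(h1 \<circ> h2) x = x" unfolding h1_def h2_def by (simp add: phi_pw_out)
    qed
    have g3: "phi (pw w M) (pw w (vine (Suc (a + b)))) \<in> G0"
      using spec[OF W_lemma, of w] unfolding M_def .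
    have "phi (pw w M) (pw w (vine (Suc (a + b)))) \<circ> phi (pw w N) (pw w M) = phi (pw w N) (pw w (vine (Suc (a + b))))"
    proof (rule phi_comp)
      show "pf (pw w N)" using pf_code_pw[OF cN] .
      show "pf (pw w M)" using pf_code_pw[OF cM] .
      show "length (pw w N) = length (pw w M)" "length (pw w M) = length (pw w (vine (Suc (a + b))))"
        using la lb by (simp_all add: N_def M_def)
      show "cover (pw w M) \<subseteq> cover (pw w N)" using cover_pw_code[OF cN] cover_pw_code[OF cM] by simp
    qed
    then have "phi (pw w N) (pw w (vine (Suc (a + b)))) \<in> G0" using e1 g1 g2 g3 G0_comp by metis
    moreover have "length N - 1 = Suc (a + b)" using la lb by (simp add: N_def)
    ultimately show "phi (pw w N) (pw w (vine (length N - 1))) \<in> G0" by simp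
  qed
qed

lemma code_phi_G0:
  assumes "code P" "code Q" "length P = length Q"
  shows "phi P Q \<in> G0"
proof -
  define V where "V = vine (length P - 1)"
  have cV: "code V" unfolding V_def by (rule code_vine)
  have lV: "length V = length P" using code_nonempty[OF assms(1)] by (simp add: V_def)
  have a: "phi P V \<in> G0" using spec[OF code_to_vine[OF assms(1)], of "[]"] by (simp add: V_def)
  have b: "phi Q V \<in> G0" using spec[OF code_to_vine[OF assms(2)], of "[]"] assms(3) by (simp add: V_def)
  have "inv (phi Q V) = phi V Q"
    by (rule phi_inv) (use assms cV lV code_pf code_cover in auto)
  then have b': "phi V Q \<in> G0" using G0_inv[OF b] by simp
  have "phi V Q \<circ> phi P V = phi P Q"
    by (rule phi_comp) (use assms cV lV code_pf code_cover in auto)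
  then show ?thesis using a b' G0_comp by metis
qed

lemma rot_G0:
  assumes "code D"
  shows "phi D (rotate1 D) \<in> G0"
proof (cases "length D = 1")
  case True
  then obtain d where "D = [d]" by (metis One_nat_def length_0_conv length_Suc_conv)
  then show ?thesis using phi_id[of "[d]"] G0_id by simp
next
  case False
  then obtain k where k: "length D = Suc (Suc k)" using code_nonempty[OF assms]
    by (metis One_nat_def Suc_pred length_greater_0_conv not0_implies_Suc)
  define E where "E = pw [False] (vine k) @ pw [True] [[]]"
  define V where "V = vine (Suc k)"
  have cE: "code E" unfolding E_def by (intro code.intros code_vine)
  have cV: "code V" unfolding V_def by (rule code_vine)
  have lE: "length E = Suc (Suc k)" by (simp add: E_def)
  have lV: "length V = Suc (Suc k)" by (simp add: V_def)
  have rV: "rotate1 V = pw [True] (vine k) @ pw [False] [[]]" by (simp add: V_def)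
  have c0e: "phi E (rotate1 V) = c0"
  proof (rule phi_unique')
    show "pf E" using code_pf[OF cE] .
    show "length E = length (rotate1 V)" using lE lV by simp
    show "rigall c0 E (rotate1 V)" unfolding E_def rV
      using rigall_pw[OF c0_rigid[of False, simplified], of "vine k"]
        rigall_pw[OF c0_rigid[of True, simplified], of "[[]]"]
      by (simp only: rigall_app length_pw)
    show "x \<notin> cover E \<Longrightarrow> c0 x = x" for x using code_cover[OF cE] by simp
  qed
  have pE: "pf E" and pV: "pf V" and pD: "pf D" using cE cV assms code_pf by auto
  have uE: "cover E = UNIV" and uV: "cover V = UNIV" and uD: "cover D = UNIV"
    using cE cV assms code_cover by auto
  have "phi (rotate1 V) (rotate1 E) \<circ> phi E (rotate1 V) = phi E (rotate1 E)"
    by (rule phi_comp) (use pE pV lE lV uE in auto)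
  moreover have "phi (rotate1 V) (rotate1 E) = phi V E"
    using phi_rotate[of V E 1] lE lV by simp
  ultimately have rhoE: "phi E (rotate1 E) \<in> G0"
    using c0e code_phi_G0[OF cV cE] lE lV G0_comp G0_gens(3) by metis
  have "phi E (rotate1 E) \<circ> phi D E = phi D (rotate1 E)"
    by (rule phi_comp) (use pE pD lE k uE uD in auto)
  moreover have "phi (rotate1 E) (rotate1 D) \<circ> phi D (rotate1 E) = phi D (rotate1 D)"
    by (rule phi_comp) (use pE pD lE k uE uD in auto)
  moreover have "phi (rotate1 E) (rotate1 D) = phi E D"
    using phi_rotate[of E D 1] lE k by simp
  ultimately show ?thesis
    using rhoE code_phi_G0[OF cE assms] code_phi_G0[OF assms cE] lE k G0_comp by metis
qed

lemma uniform_level: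
  assumes "loc_rigid v"
  shows "\<exists>N. \<forall>d. length d = N \<longrightarrow> (\<exists>r. maps_rigidly v d r)"
proof -
  define W where "W = {w. \<exists>r. maps_rigidly v w r}"
  have op: "\<forall>U\<in>cone ` W. openin cantor_top U" using open_cone by blast
  have cov: "topspace cantor_top \<subseteq> \<Union>(cone ` W)"
  proof
    fix x assume "x \<in> topspace cantor_top"
    obtain w1 w2 where "x \<in> cone w1" "maps_rigidly v w1 w2" using assms unfolding loc_rigid_def by meson
    then show "x \<in> \<Union>(cone ` W)" unfolding W_def by blast
  qed
  obtain F where F: "finite F" "F \<subseteq> cone ` W" "topspace cantor_top \<subseteq> \<Union>F"
    using compact_cantor[unfolded compact_space_alt] op cov by meson
  obtain W' where W': "W' \<subseteq> W" "finite W'" "F = cone ` W'"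
    using finite_subset_image[OF F(1,2)] by blast
  define N where "N = Max (insert 0 (length ` W'))"
  have "\<forall>d. length d = N \<longrightarrow> (\<exists>r. maps_rigidly v d r)"
  proof (intro allI impI)
    fix d :: "bool list" assume d: "length d = N"
    have "cat d zer \<in> \<Union>F" using F(3) by auto
    then obtain w where w: "w \<in> W'" "cat d zer \<in> cone w" using W'(3) by auto
    have "length w \<le> N" unfolding N_def using w(1) W'(2) by (auto intro: Max_ge)
    then have "w = take (length w) d" using cones_meet_prefix[OF w(2) cat_in_cone] d by simp
    then have de: "d = w @ drop (length w) d" by (metis append_take_drop_id)
    obtain r where "maps_rigidly v w r" using w(1) W'(1) by (auto simp: W_def)
    then have "maps_rigidly v (w @ drop (length w) d) (r @ drop (length w) d)" by (rule rig_append)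
    then show "\<exists>r. maps_rigidly v d r" using de by metis
  qed
  then show ?thesis by blast
qed

fun lev :: "nat \<Rightarrow> bool list list" where
  "lev 0 = [[]]"
| "lev (Suc n) = pw [False] (lev n) @ pw [True] (lev n)"

lemma code_lev: "code (lev n)"
  by (induction n) (auto intro: code.intros)

lemma lev_length: "d \<in> set (lev n) \<Longrightarrow> length d = n"
  by (induction n arbitrary: d) (auto simp: pw_def)

lemma lev_nonempty: "lev n \<noteq> []"
  using code_nonempty code_lev by blast

lemma lev_0: "lev n ! 0 = replicate n False"
proof (induction n)
  case 0 then show ?case by simp
next
  case (Suc n)
  have "lev n \<noteq> []" by (rule lev_nonempty)
  then show ?case using Suc by (simp add: pw_def nth_append)
qed

lemma cat_zer: "zer \<in> cone p \<Longrightarrow> cat p zer = zer"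
proof -
  assume "zer \<in> cone p"
  then have "cat p (sh (length p) zer) = zer" by (rule cat_sh)
  moreover have "sh (length p) zer = zer" by (simp add: sh_def zer_def)
  ultimately show ?thesis by simp
qed

lemma zer_cone_rep: "zer \<in> cone (replicate n False)"
  by (simp add: cone_iff zer_def)

lemma sorted_split:
  assumes "sorted_wrt P xs" "\<And>a b. a \<in> set xs \<Longrightarrow> b \<in> set xs \<Longrightarrow> A a \<Longrightarrow> \<not> A b \<Longrightarrow> \<not> P a b"
  shows "xs = filter (\<lambda>x. \<not> A x) xs @ filter A xs"
  using assms
proof (induction xs)
  case Nil then show ?case by simp
next
  case (Cons x xs)
  have IH: "xs = filter (\<lambda>x. \<not> A x) xs @ filter A xs" using Cons by auto
  show ?case
  proof (cases "A x")
    case True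
    have "\<forall>y\<in>set xs. A y" using Cons.prems True by auto
    then show ?thesis using True by simp
  next
    case False
    then show ?thesis using IH by simp
  qed
qed

lemma slt_unpw: "slt (w @ p) (w @ q) \<Longrightarrow> slt p q"
  unfolding slt_def
  by (metis cat_in_cone_append_iff lex_less_cat)

lemma pf_append_D: "pf (A @ B) \<Longrightarrow> pf A \<and> pf B"
  by (auto simp: pf_def)

lemma pf_unpw: "pf (pw w X) \<Longrightarrow> pf X"
proof -
  assume a: "pf (pw w X)"
  have "distinct X" using a by (auto simp: pf_def pw_def distinct_map)
  moreover have "cone p \<inter> cone q = {}" if "p \<in> set X" "q \<in> set X" "p \<noteq> q" for p q
  proof (rule ccontr)
    assume "cone p \<inter> cone q \<noteq> {}"
    then obtain x where "x \<in> cone p" "x \<in> cone q" by blast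
    then have "cat w x \<in> cone (w @ p)" "cat w x \<in> cone (w @ q)" by simp_all
    moreover have "w @ p \<in> set (pw w X)" "w @ q \<in> set (pw w X)" "w @ p \<noteq> w @ q"
      using that by (auto simp: pw_def)
    ultimately show False using a unfolding pf_def by blast
  qed
  ultimately show ?thesis by (simp add: pf_def)
qed

lemma sum_len_pw: "sum_list (map length (pw w X)) = sum_list (map length X) + length w * length X"
  by (induction X) (auto simp: pw_def)

lemma code_of_sorted:
  "sorted_wrt slt R \<Longrightarrow> pf R \<Longrightarrow> cover R = UNIV \<Longrightarrow> code R"
proof (induction "sum_list (map length R)" arbitrary: R rule: less_induct)
  case less
  show ?case
  proof (cases "[] \<in> set R")
    case True
    have all: "p = []" if "p \<in> set R" for p
    proof (rule ccontr)
      assume "p \<noteq> []"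
      then have "cone p \<inter> cone [] = {}" using less.prems(2) True that unfolding pf_def by blast
      then show False using cone_nonempty by simp
    qed
    obtain a R' where R: "R = a # R'" using True by (cases R) auto
    have "a = []" using all R by simp
    moreover have "R' = []"
    proof (rule ccontr)
      assume "R' \<noteq> []"
      then obtain b where "b \<in> set R'" by (cases R') auto
      then have "b = []" using all R by simp
      then show False using less.prems(2) R \<open>a = []\<close> \<open>b \<in> set R'\<close> by (simp add: pf_def)
    qed
    ultimately show ?thesis using R code_leaf by simp
  next
    case False
    define R0 where "R0 = map tl (filter (\<lambda>p. \<not> hd p) R)"
    define R1 where "R1 = map tl (filter hd R)"
    have ne: "p \<noteq> []" if "p \<in> set R" for p using that False by auto
    have hF: "p \<noteq> [] \<Longrightarrow> \<not> hd p \<Longrightarrow> [False] @ tl p = p" for p by (cases p) auto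
    have hT: "p \<noteq> [] \<Longrightarrow> hd p \<Longrightarrow> [True] @ tl p = p" for p by (cases p) auto
    have e0: "pw [False] R0 = filter (\<lambda>p. \<not> hd p) R"
      unfolding R0_def pw_def map_map
      by (rule map_idI) (use ne hF in auto)
    have e1: "pw [True] R1 = filter hd R"
      unfolding R1_def pw_def map_map
      by (rule map_idI) (use ne hT in auto)
    have nslt: "\<not> slt a b" if "a \<in> set R" "b \<in> set R" "hd a" "\<not> hd b" for a b
    proof
      assume s: "slt a b"
      have a: "a = [True] @ tl a" using ne[OF that(1)] that(3) by (cases a) auto
      have b: "b = [False] @ tl b" using ne[OF that(2)] that(4) by (cases b) auto
      have "lex_less (cat b zer) (cat a zer)"
        by (rule lex_less_split'[of _ "[]"]) (metis a b cat_in_cone self_append_conv2 cone_append_sub subsetD)+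
      moreover have "lex_less (cat a zer) (cat b zer)" using s by (simp add: slt_def)
      ultimately show False using lex_less_asym by blast
    qed
    have Re: "R = pw [False] R0 @ pw [True] R1"
      unfolding e0 e1 by (rule sorted_split[OF less.prems(1)]) (use nslt in blast)
    have pfR: "pf (pw [False] R0)" "pf (pw [True] R1)" using less.prems(2) Re pf_append_D by metis+
    have cov0: "cover R0 = UNIV"
    proof -
      have "cat [False] y \<in> cover R" for y using less.prems(3) by simp
      moreover have "cat [False] y \<notin> cover (pw [True] R1)" for y
        using cover_pw_sub[of "[True]" R1] cone_FT_disj'[of "cat [False] y" "[]"] by auto
      ultimately have "cat [False] y \<in> cover (pw [False] R0)" for y using Re by fastforce
      then show ?thesis by auto
    qed
    have cov1: "cover R1 = UNIV"
    proof -
      have "cat [True] y \<in> cover R" for y using less.prems(3) by simp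
      moreover have "cat [True] y \<notin> cover (pw [False] R0)" for y
        using cover_pw_sub[of "[False]" R0] cone_FT_disj'[of _ "[]"] by fastforce
      ultimately have "cat [True] y \<in> cover (pw [True] R1)" for y using Re by fastforce
      then show ?thesis by auto
    qed
    have R0ne: "R0 \<noteq> []" using cov0 by auto
    have R1ne: "R1 \<noteq> []" using cov1 by auto
    have s0: "sorted_wrt slt (pw [False] R0)" and s1: "sorted_wrt slt (pw [True] R1)"
      using less.prems(1) Re by (metis sorted_wrt_append)+
    have ss0: "sorted_wrt slt R0"
      using s0 unfolding pw_def sorted_wrt_map by (metis (no_types, lifting) slt_unpw sorted_wrt_mono_rel)
    have ss1: "sorted_wrt slt R1"
      using s1 unfolding pw_def sorted_wrt_map by (metis (no_types, lifting) slt_unpw sorted_wrt_mono_rel)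
    have m: "sum_list (map length R) = sum_list (map length R0) + length R0 + sum_list (map length R1) + length R1"
      by (subst Re) (simp add: sum_len_pw)
    have "code R0"
      using less.hyps[of R0] ss0 pf_unpw[OF pfR(1)] cov0 m R1ne by simp
    moreover have "code R1"
      using less.hyps[of R1] ss1 pf_unpw[OF pfR(2)] cov1 m R0ne by simp
    ultimately show ?thesis using Re code_node by simp
  qed
qed

lemma mono_of_zer:
  assumes "u \<in> ThompsonT" "u zer = zer" "lex_less x y"
  shows "lex_less (u x) (u y)"
proof -
  have inj: "inj u" using assms(1) inT_bij bij_is_inj by blast
  show ?thesis
  proof (cases "x = zer")
    case True
    then have "y \<noteq> zer" using assms(3) by auto
    then have "u y \<noteq> zer" using inj assms(2) by (metis injD)
    then show ?thesis using True assms(2) zer_least by simp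
  next
    case False
    then have "lex_less zer x" by (rule zer_least)
    then have "cyc zer x y" using assms(3) by (simp add: cyc_def)
    then have "cyc zer (u x) (u y)" using inT_cyc[OF assms(1)] assms(2) unfolding cyc_pres_def by metis
    moreover have "\<not> lex_less z zer" for z by (auto simp: lex_less_def zer_def)
    ultimately show ?thesis unfolding cyc_def by blast
  qed
qed

lemma rot_pow_G0:
  assumes "code D"
  shows "phi D (rotate k D) \<in> G0"
proof (induction k)
  case 0
  then show ?case by (metis (no_types) phi_id[OF code_pf[OF assms]] G0_id rotate0 id_apply)
next
  case (Suc k)
  have pD: "pf D" using code_pf[OF assms] .
  have "phi (rotate k D) (rotate (Suc k) D) \<circ> phi D (rotate k D) = phi D (rotate (Suc k) D)"
    by (rule phi_comp) (use pD in auto)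
  moreover have "phi (rotate k D) (rotate (Suc k) D) = phi D (rotate1 D)"
  proof -
    have "rotate (Suc k) D = rotate k (rotate1 D)" by (simp add: rotate1_rotate_swap)
    then show ?thesis using phi_rotate[of D "rotate1 D" k] by simp
  qed
  ultimately show ?case using rot_G0[OF assms] Suc G0_comp by metis
qed

theorem T_sub_G0:
  assumes v: "v \<in> ThompsonT"
  shows "v \<in> G0"
proof -
  obtain N where N: "\<forall>d. length d = N \<longrightarrow> (\<exists>r. maps_rigidly v d r)"
    using uniform_level[OF inT_rigid[OF v]] by blast
  define D where "D = lev N"
  have cD: "code D" unfolding D_def by (rule code_lev)
  have pD: "pf D" using code_pf[OF cD] .
  have uD: "cover D = UNIV" using code_cover[OF cD] .
  have lenD: "d \<in> set D \<Longrightarrow> length d = N" for d unfolding D_def by (rule lev_length)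
  define r where "r d = (SOME r. maps_rigidly v d r)" for d
  have rig: "d \<in> set D \<Longrightarrow> maps_rigidly v d (r d)" for d
    unfolding r_def using N lenD by (metis someI_ex)
  define R where "R = map r D"
  define m where "m = length D"
  have lR: "length R = m" by (simp add: R_def m_def)
  have rigi: "v (cat (D ! i) y) = cat (R ! i) y" if "i < m" for i y
    using rig[of "D ! i"] that by (simp add: R_def m_def maps_rigidly_def)
  have bv: "bij v" using inT_bij[OF v] .
  have vD: "v = phi D R"
  proof (rule sym, rule phi_unique')
    show "pf D" by fact
    show "length D = length R" by (simp add: R_def)
    show "rigall v D R" unfolding rigall_def R_def
      by (auto simp: zip_map2 rig zip_same_conv_map)
    show "x \<notin> cover D \<Longrightarrow> v x = x" for x using uD by simp
  qed
  have disj: "cone (R ! i) \<inter> cone (R ! j) = {}" if "i < m" "j < m" "i \<noteq> j" for i j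
  proof (rule ccontr)
    assume "cone (R ! i) \<inter> cone (R ! j) \<noteq> {}"
    then obtain x where x: "x \<in> cone (R ! i)" "x \<in> cone (R ! j)" by blast
    define a where "a = sh (length (R ! i)) x"
    define b where "b = sh (length (R ! j)) x"
    have "v (cat (D ! i) a) = v (cat (D ! j) b)"
      using rigi[OF that(1)] rigi[OF that(2)] x by (simp add: a_def b_def cat_sh)
    then have e: "cat (D ! i) a = cat (D ! j) b" using bv bij_is_inj injD by metis
    have "length (D ! i) = N" "length (D ! j) = N" using that lenD by (auto simp: m_def)
    then have "D ! i = D ! j" using cat_eq_cat_prefix[OF e] by simp
    then show False using that pD by (simp add: pf_def m_def nth_eq_iff_index_eq)
  qed
  have pR: "pf R"
  proof -
    have "distinct R"
    proof (rule distinct_conv_nth[THEN iffD2], intro allI impI)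
      fix i j assume "i < length R" "j < length R" "i \<noteq> j"
      then show "R ! i \<noteq> R ! j" using disj[of i j] lR cone_nonempty by auto
    qed
    moreover have "cone p \<inter> cone q = {}" if "p \<in> set R" "q \<in> set R" "p \<noteq> q" for p q
      using that disj lR by (metis in_set_conv_nth)
    ultimately show ?thesis by (simp add: pf_def)
  qed
  have uR: "cover R = UNIV"
  proof -
    have "x \<in> cover R" for x
    proof -
      obtain z where z: "x = v z" using bv by (metis bij_pointE)
      obtain i where i: "i < m" "z \<in> cone (D ! i)" using uD unfolding cover_def m_def
        by (metis UNIV_I UN_E in_set_conv_nth)
      have "z = cat (D ! i) (sh (length (D ! i)) z)" using i(2) by (simp add: cat_sh)
      then have "x = cat (R ! i) (sh (length (D ! i)) z)" using rigi[OF i(1)] z by metis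
      then show ?thesis using i(1) lR unfolding cover_def by (metis UN_iff cat_in_cone nth_mem)
    qed
    then show ?thesis by auto
  qed
  obtain k where k: "k < m" "zer \<in> cone (R ! k)"
    using uR lR unfolding cover_def by (metis UNIV_I UN_E in_set_conv_nth)
  define psi where "psi = phi D (rotate k D)"
  have gpsi: "psi \<in> G0" unfolding psi_def by (rule rot_pow_G0[OF cD])
  have Tpsi: "psi \<in> ThompsonT" using gpsi G0_T by blast
  define R' where "R' = rotate k R"
  define u where "u = phi D R'"
  have uvp: "u = v \<circ> psi"
  proof -
    have "phi (rotate k D) R' \<circ> phi D (rotate k D) = phi D R'"
      by (rule phi_comp) (use pD lR in \<open>auto simp: R'_def m_def\<close>)
    moreover have "phi (rotate k D) R' = v" unfolding R'_def vD using lR phi_rotate m_def by metis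
    ultimately show ?thesis by (simp add: u_def psi_def)
  qed
  have uT: "u \<in> ThompsonT" using uvp T_comp v Tpsi by simp
  have u0: "u zer = zer"
  proof -
    have m0: "0 < m" using lev_nonempty by (simp add: m_def D_def)
    have "zer = cat (D ! 0) zer" using cat_zer[OF zer_cone_rep] by (simp add: D_def lev_0)
    then have "u zer = cat (R' ! 0) zer"
      using phi_rigid_nth[OF pD _ m0[unfolded m_def], of R' zer] lR by (simp add: u_def R'_def m_def)
    also have "R' ! 0 = R ! k" using k(1) lR m0 by (simp add: R'_def nth_rotate)
    finally show ?thesis using cat_zer[OF k(2)] by simp
  qed
  have lR': "length R' = m" using lR by (simp add: R'_def)
  have sD: "sorted_wrt slt D" using code_sorted[OF cD] .
  have sR': "sorted_wrt slt R'"
    unfolding sorted_wrt_iff_nth_less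
  proof (intro allI impI)
    fix i j assume ij: "i < j" "j < length R'"
    show "slt (R' ! i) (R' ! j)" unfolding slt_def
    proof (intro ballI)
      fix x y assume x: "x \<in> cone (R' ! i)" and y: "y \<in> cone (R' ! j)"
      define a where "a = sh (length (R' ! i)) x"
      define b where "b = sh (length (R' ! j)) y"
      have ux: "u (cat (D ! i) a) = x"
        using phi_rigid_nth[OF pD, of R' i a] ij lR' x by (simp add: u_def m_def a_def cat_sh)
      have uy: "u (cat (D ! j) b) = y"
        using phi_rigid_nth[OF pD, of R' j b] ij lR' y by (simp add: u_def m_def b_def cat_sh)
      have "slt (D ! i) (D ! j)" using sD ij lR' by (simp add: sorted_wrt_iff_nth_less m_def)
      then have "lex_less (cat (D ! i) a) (cat (D ! j) b)" by (simp add: slt_def)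
      then show "lex_less x y" using mono_of_zer[OF uT u0] ux uy by metis
    qed
  qed
  have cR': "code R'"
    by (rule code_of_sorted[OF sR']) (use pR uR in \<open>simp_all add: R'_def\<close>)
  have gu: "u \<in> G0" unfolding u_def by (rule code_phi_G0[OF cD cR']) (simp add: lR' m_def)
  have "v = u \<circ> inv psi"
    using uvp bij_is_surj[OF inT_bij[OF Tpsi]] by (simp add: surj_iff comp_assoc)
  then show ?thesis using gu G0_inv[OF gpsi] G0_comp by metis
qed

theorem T_generated: "generates S0 ThompsonT"
  unfolding generates_def
proof
  show "S0 \<subseteq> ThompsonT" by (rule S0_T)
  show "\<forall>g\<in>ThompsonT. \<exists>ws\<in>words_over S0. eval_word ws = g"
    using T_sub_G0 unfolding G0_def gen_def by blast
qed

lemma finite_S0: "finite S0"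
  by (simp add: S0_def)

lemma wl_attained:
  assumes "generates S ThompsonT" "g \<in> ThompsonT"
  shows "\<exists>ws\<in>words_over S. length ws = word_length S g \<and> eval_word ws = g"
proof -
  have ex: "\<exists>n ws. ws \<in> words_over S \<and> length ws = n \<and> eval_word ws = g"
    using assms unfolding generates_def by blast
  show ?thesis unfolding word_length_def
    using LeastI_ex[of "\<lambda>n. \<exists>ws\<in>words_over S. length ws = n \<and> eval_word ws = g"] ex by blast
qed

lemma wl_le:
  assumes "ws \<in> words_over S" "eval_word ws = g"
  shows "word_length S g \<le> length ws"
  unfolding word_length_def using assms by (intro Least_le) blast

lemma wl_comp:
  assumes "generates S ThompsonT" "f \<in> ThompsonT" "g \<in> ThompsonT"
  shows "word_length S (f \<circ> g) \<le> word_length S f + word_length S g"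
proof -
  obtain ws where ws: "ws \<in> words_over S" "length ws = word_length S f" "eval_word ws = f"
    using wl_attained[OF assms(1,2)] by blast
  obtain vs where vs: "vs \<in> words_over S" "length vs = word_length S g" "eval_word vs = g"
    using wl_attained[OF assms(1,3)] by blast
  have "word_length S (f \<circ> g) \<le> length (ws @ vs)"
    by (rule wl_le) (use ws vs in \<open>auto simp: words_over_append eval_word_append\<close>)
  then show ?thesis using ws vs by simp
qed

lemma wl_id: "word_length S id = 0"
proof -
  have "word_length S id \<le> length ([] :: ('a \<Rightarrow> 'a) list)"
    by (rule wl_le) (auto simp: words_over_def)
  then show ?thesis by simp
qed

section \<open>Finiteness and upper bound\<close>

definition ballset :: "(cantor \<Rightarrow> cantor) set \<Rightarrow> nat \<Rightarrow> (cantor \<Rightarrow> cantor) set" where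
  "ballset S n = {g. g \<in> ThompsonT \<and> word_length S g \<le> n}"

lemma ballset_sub:
  assumes "generates S ThompsonT"
  shows "ballset S n \<subseteq> eval_word ` {xs. set xs \<subseteq> S \<union> inv ` S \<and> length xs \<le> n}"
proof
  fix g assume "g \<in> ballset S n"
  then have g: "g \<in> ThompsonT" "word_length S g \<le> n" by (auto simp: ballset_def)
  obtain ws where "ws \<in> words_over S" "length ws = word_length S g" "eval_word ws = g"
    using wl_attained[OF assms g(1)] by blast
  then show "g \<in> eval_word ` {xs. set xs \<subseteq> S \<union> inv ` S \<and> length xs \<le> n}"
    using g(2) by (auto simp: words_over_def)
qed

lemma finite_ballset:
  assumes "finite S" "generates S ThompsonT"
  shows "finite (ballset S n)"
  using finite_subset[OF ballset_sub[OF assms(2)]] finite_lists_length_le[of "S \<union> inv ` S" n] assms(1)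
  by auto

lemma card_ballset:
  assumes "finite S" "generates S ThompsonT"
  shows "card (ballset S n) \<le> (\<Sum>i\<le>n. card (S \<union> inv ` S) ^ i)"
proof -
  have "card (ballset S n) \<le> card (eval_word ` {xs. set xs \<subseteq> S \<union> inv ` S \<and> length xs \<le> n})"
    by (rule card_mono[OF _ ballset_sub[OF assms(2)]]) (use assms(1) finite_lists_length_le[of "S \<union> inv ` S" n] in auto)
  also have "\<dots> \<le> card {xs. set xs \<subseteq> S \<union> inv ` S \<and> length xs \<le> n}"
    by (rule card_image_le) (use assms(1) finite_lists_length_le[of "S \<union> inv ` S" n] in auto)
  also have "\<dots> = (\<Sum>i\<le>n. card (S \<union> inv ` S) ^ i)"
    by (rule card_lists_length_le) (use assms(1) in auto)
  finally show ?thesis .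
qed

lemma conj_growth_eq: "conj_growth ThompsonT S n = card (conj_class ThompsonT ` ballset S n)"
proof -
  have "{conj_class ThompsonT g |g. g \<in> ThompsonT \<and> word_length S g \<le> n} = conj_class ThompsonT ` ballset S n"
    unfolding ballset_def by blast
  then show ?thesis unfolding conj_growth_def by simp
qed

lemma conj_growth_le_ball:
  assumes "finite S" "generates S ThompsonT"
  shows "conj_growth ThompsonT S n \<le> card (ballset S n)"
  unfolding conj_growth_eq by (rule card_image_le[OF finite_ballset[OF assms]])

lemma sum_pow_le: "(\<Sum>i\<le>n. (k::nat) ^ i) \<le> (k + 1) ^ n"
proof (induction n)
  case 0 then show ?case by simp
next
  case (Suc n)
  have "(\<Sum>i\<le>Suc n. k ^ i) = (\<Sum>i\<le>n. k ^ i) + k ^ Suc n" by simp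
  also have "\<dots> \<le> (k + 1) ^ n + k * (k + 1) ^ n"
    using Suc power_mono[of k "k+1" n] by (simp add: add_mono)
  also have "\<dots> = (k + 1) ^ Suc n" by simp
  finally show ?case .
qed

lemma upper_growth:
  assumes "finite S" "generates S ThompsonT"
  shows "growth_le (conj_growth ThompsonT S) (\<lambda>n. 2 ^ n)"
proof -
  define k where "k = card (S \<union> inv ` S)"
  define c where "c = k + 1"
  have c2: "c \<le> 2 ^ c" unfolding c_def using less_exp[of "k+1"] by simp
  have "conj_growth ThompsonT S n \<le> c * 2 ^ (c * n + c) + c" for n
  proof -
    have "conj_growth ThompsonT S n \<le> (k + 1) ^ n"
      using conj_growth_le_ball[OF assms, of n] card_ballset[OF assms, of n] sum_pow_le[where n=n and k=k]
      unfolding k_def by linarith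
    also have "\<dots> \<le> (2 ^ c) ^ n" using c2 unfolding c_def by (rule power_mono) simp
    also have "\<dots> = 2 ^ (c * n)" by (simp add: power_mult)
    also have "\<dots> \<le> 2 ^ (c * n + c)" by (simp add: power_increasing)
    also have "\<dots> \<le> c * 2 ^ (c * n + c) + c" unfolding c_def by simp
    finally show ?thesis .
  qed
  then show ?thesis unfolding growth_le_def c_def by (intro exI[of _ "k + 1"]) auto
qed

lemma conj_growth_mono:
  assumes "finite S" "generates S ThompsonT" "n \<le> m"
  shows "conj_growth ThompsonT S n \<le> conj_growth ThompsonT S m"
proof -
  have "ballset S n \<subseteq> ballset S m" using assms(3) unfolding ballset_def by auto
  then have "conj_class ThompsonT ` ballset S n \<subseteq> conj_class ThompsonT ` ballset S m" by (rule image_mono)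
  moreover have "finite (conj_class ThompsonT ` ballset S m)" using finite_ballset[OF assms(1,2)] by (rule finite_imageI)
  ultimately show ?thesis unfolding conj_growth_eq by (rule card_mono[rotated])
qed

lemma card_fibers:
  assumes "finite A" "\<And>y. y \<in> f ` A \<Longrightarrow> card {x\<in>A. f x = y} \<le> k"
  shows "card A \<le> k * card (f ` A)"
proof -
  have e: "A = (\<Union>y\<in>f ` A. {x\<in>A. f x = y})" by auto
  have "card (\<Union>y\<in>f ` A. {x\<in>A. f x = y}) \<le> (\<Sum>y\<in>f ` A. card {x\<in>A. f x = y})"
    by (rule card_UN_le) (simp add: assms(1))
  then have "card A \<le> (\<Sum>y\<in>f ` A. card {x\<in>A. f x = y})"
    by (subst e) assumption
  also have "\<dots> \<le> (\<Sum>y\<in>f ` A. k)" by (rule sum_mono) (use assms(2) in auto)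
  also have "\<dots> = k * card (f ` A)" by simp
  finally show ?thesis .
qed

lemma cat_one: "one \<in> cone p \<Longrightarrow> cat p one = one"
proof -
  assume "one \<in> cone p"
  then have "cat p (sh (length p) one) = one" by (rule cat_sh)
  moreover have "sh (length p) one = one" by (simp add: sh_def one_def)
  ultimately show ?thesis by simp
qed

lemma x0_F: "x0 (cat [False] y) = cat [False, False] y"
  using x0_rig(1) by (simp add: maps_rigidly_def)
lemma x0_TF: "x0 (cat [True, False] y) = cat [False, True] y"
  using x0_rig(2) by (simp add: maps_rigidly_def)
lemma x0_TT: "x0 (cat [True, True] y) = cat [True] y"
  using x0_rig(3) by (simp add: maps_rigidly_def)

lemma shiftF:
  assumes "z \<noteq> zer" shows "lex_less (cat [False] z) z"
proof -
  have ex: "\<exists>i. z i" using assms by (auto simp: zer_def fun_eq_iff)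
  define n where "n = (LEAST i. z i)"
  have zn: "z n" unfolding n_def by (rule LeastI_ex[OF ex])
  have below: "\<not> z i" if "i < n" for i using that not_less_Least n_def by blast
  show ?thesis unfolding lex_less_def
  proof (intro exI[of _ n] conjI allI impI)
    fix i assume "i < n"
    then show "cat [False] z i = z i" using below by (cases i) (auto simp: cat_def)
  next
    show "\<not> cat [False] z n" using below by (cases n) (auto simp: cat_def)
  qed (rule zn)
qed

lemma shiftT:
  assumes "z \<noteq> one" shows "lex_less z (cat [True] z)"
proof -
  have ex: "\<exists>i. \<not> z i" using assms by (auto simp: one_def fun_eq_iff)
  define n where "n = (LEAST i. \<not> z i)"
  have zn: "\<not> z n" unfolding n_def by (rule LeastI_ex[OF ex])
  have below: "z i" if "i < n" for i using that not_less_Least n_def by blast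
  show ?thesis unfolding lex_less_def
  proof (intro exI[of _ n] conjI allI impI)
    fix i assume "i < n"
    then show "z i = cat [True] z i" using below by (cases i) (auto simp: cat_def)
  next
    show "cat [True] z n" using below by (cases n) (auto simp: cat_def)
  qed (rule zn)
qed

lemma zer_F: "cat [False] zer = zer" by (rule cat_zer) (simp add: cone_iff zer_def)
lemma one_T: "cat [True] one = one" by (rule cat_one) (simp add: cone_iff one_def)

lemma x0_zer: "x0 zer = zer"
  using x0_F[of zer] zer_F by (metis cat_Cons)

lemma x0_one: "x0 one = one"
  using x0_TT[of one] one_T by (metis cat_Cons)

lemma split3:
  obtains z where "y = cat [False] z" | z where "y = cat [True, False] z" | z where "y = cat [True, True] z"
proof -
  have c: "y \<in> cone w \<Longrightarrow> \<exists>z. y = cat w z" for w using cat_sh by metis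
  consider "\<not> y 0" | "y 0" "\<not> y 1" | "y 0" "y 1" by blast
  then show ?thesis
  proof cases
    case 1 then have "y \<in> cone [False]" by (simp add: cone_iff)
    then show ?thesis using that c by blast
  next
    case 2 then have "y \<in> cone [True, False]" by (auto simp: cone_iff less_Suc_eq numeral_2_eq_2)
    then show ?thesis using that c by blast
  next
    case 3 then have "y \<in> cone [True, True]" by (auto simp: cone_iff less_Suc_eq numeral_2_eq_2)
    then show ?thesis using that c by blast
  qed
qed

lemma x0_dec:
  assumes "y \<noteq> zer" "y \<noteq> one"
  shows "lex_less (x0 y) y"
proof (cases y rule: split3)
  case (1 z)
  then have "z \<noteq> zer" using assms zer_F by auto
  then have "lex_less (cat [False] (cat [False] z)) (cat [False] z)" using shiftF by simp
  then show ?thesis using 1 x0_F by (metis cat_Cons)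
next
  case (2 z)
  have "x0 y \<in> cone ([] @ [False])" using 2 x0_TF by (metis append_Nil cat_Cons cat_in_cone)
  moreover have "y \<in> cone ([] @ [True])" using 2 by (metis append_Nil cat_Cons cat_in_cone)
  ultimately show ?thesis by (rule lex_less_split')
next
  case (3 z)
  then have "z \<noteq> one" using assms one_T by (metis cat_Cons)
  then have "lex_less (cat [True] z) (cat [True] (cat [True] z))" using shiftT by simp
  then show ?thesis using 3 x0_TT by (metis cat_Cons)
qed

lemma bij_x0: "bij x0" using G0_bij G0_gens(1) by blast

definition XX :: "bool \<Rightarrow> cantor \<Rightarrow> cantor" where
  "XX b = (if b then x0 else inv x0)"

lemma inv_x0_zer: "inv x0 zer = zer" using x0_zer bij_x0 by (metis bij_is_inj inv_f_f)
lemma inv_x0_one: "inv x0 one = one" using x0_one bij_x0 by (metis bij_is_inj inv_f_f)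

lemma XX_zer [simp]: "XX b zer = zer" by (simp add: XX_def x0_zer inv_x0_zer)
lemma XX_one [simp]: "XX b one = one" by (simp add: XX_def x0_one inv_x0_one)

lemma XX_bij: "bij (XX b)" by (simp add: XX_def bij_x0 bij_imp_bij_inv)

lemma XX_move:
  assumes "y \<noteq> zer" "y \<noteq> one"
  shows "(b \<longrightarrow> lex_less (XX b y) y) \<and> (\<not> b \<longrightarrow> lex_less y (XX b y))"
proof (cases b)
  case True then show ?thesis using x0_dec[OF assms] by (simp add: XX_def)
next
  case False
  define z where "z = inv x0 y"
  have xz: "x0 z = y" unfolding z_def using bij_x0 by (simp add: bij_is_surj surj_f_inv_f)
  have "z \<noteq> zer" "z \<noteq> one" using xz assms x0_zer x0_one by auto
  then have "lex_less y z" using x0_dec xz by metis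
  then show ?thesis using False by (simp add: XX_def z_def)
qed

lemma XX_fix_iff: "XX b y = y \<longleftrightarrow> y = zer \<or> y = one"
proof
  assume e: "XX b y = y"
  show "y = zer \<or> y = one"
  proof (rule ccontr)
    assume "\<not> (y = zer \<or> y = one)"
    then have "(b \<longrightarrow> lex_less (XX b y) y) \<and> (\<not> b \<longrightarrow> lex_less y (XX b y))" using XX_move by blast
    then show False using e by (cases b) auto
  qed
qed auto

lemma XX_ne: "y \<noteq> zer \<Longrightarrow> y \<noteq> one \<Longrightarrow> XX b y \<noteq> zer \<and> XX b y \<noteq> one"
  using XX_bij[of b] by (metis XX_one XX_zer bij_is_inj injD)

definition dw :: "nat \<Rightarrow> bool list" where
  "dw i = replicate i False @ [True]"

definition fe :: "bool \<Rightarrow> cantor \<Rightarrow> cantor" where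
  "fe b = (if b then Aw [False, True] else inv (Aw [False, True]))"

fun gfam :: "bool list \<Rightarrow> cantor \<Rightarrow> cantor" where
  "gfam [] = id"
| "gfam (b # u) = fe b \<circ> x0 \<circ> gfam u \<circ> inv x0"

lemma x0_phi: "x0 = phi X0P X0Q" by (simp add: x0_def Aw_def)

lemma Aw_in: "Aw w (cat w y) = cat w (x0 y)"
  unfolding Aw_def x0_phi by (rule phi_pw_in[OF pf_X0P]) simp

lemma Aw_out: "x \<notin> cone w \<Longrightarrow> Aw w x = x"
  unfolding Aw_def by (rule phi_pw_out)

lemma inv_Aw: "inv (Aw w) = phi (pw w X0Q) (pw w X0P)"
  unfolding Aw_def by (rule phi_inv) (simp_all add: pf_code_pw code_X0P code_X0Q cover_pw_code)

lemma inv_x0_phi: "inv x0 = phi X0Q X0P"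
  using inv_Aw[of "[]"] by (simp add: x0_def)

lemma invAw_in: "inv (Aw w) (cat w y) = cat w (inv x0 y)"
  unfolding inv_Aw inv_x0_phi by (rule phi_pw_in[OF pf_X0Q]) simp

lemma invAw_out: "x \<notin> cone w \<Longrightarrow> inv (Aw w) x = x"
  unfolding inv_Aw by (rule phi_pw_out)

lemma dw1: "dw 1 = [False, True]" by (simp add: dw_def)
lemma dw1': "dw (Suc 0) = [False, True]" by (simp add: dw_def)

lemma fe_in: "fe b (cat (dw 1) y) = cat (dw 1) (XX b y)"
  unfolding fe_def XX_def dw1 by (cases b) (simp_all add: Aw_in invAw_in)

lemma fe_out: "x \<notin> cone (dw 1) \<Longrightarrow> fe b x = x"
  unfolding fe_def dw1 by (cases b) (simp_all add: Aw_out invAw_out)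

lemma dw_Suc: "1 \<le> i \<Longrightarrow> dw i = [False] @ (replicate (i - 1) False @ [True])"
  by (cases i) (auto simp: dw_def)

lemma dw_Suc2: "1 \<le> i \<Longrightarrow> dw (Suc i) = [False, False] @ (replicate (i - 1) False @ [True])"
  by (cases i) (auto simp: dw_def)

lemma x0_dw: "1 \<le> i \<Longrightarrow> x0 (cat (dw i) y) = cat (dw (Suc i)) y"
proof -
  assume i: "1 \<le> i"
  have "x0 (cat ([False] @ r) y) = cat ([False, False] @ r) y" for r
    using rig_append[OF x0_rig(1), of r] by (simp add: maps_rigidly_def)
  then show ?thesis using dw_Suc[OF i] dw_Suc2[OF i] by metis
qed

lemma ix0_dw: "1 \<le> i \<Longrightarrow> inv x0 (cat (dw (Suc i)) y) = cat (dw i) y"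
  using x0_dw bij_x0 by (metis bij_is_inj inv_f_f)

lemma ix0_FT: "inv x0 (cat [False, True] y) = cat [True, False] y"
  using x0_TF bij_x0 by (metis bij_is_inj inv_f_f)

lemma dw_order:
  assumes "j < i" "a \<in> cone (dw i)" "b \<in> cone (dw j)"
  shows "lex_less a b"
proof -
  obtain k where k: "i = Suc (j + k)" using assms(1) less_iff_Suc_add by auto
  have "dw i = replicate j False @ [False] @ (replicate k False @ [True])"
  proof -
    have "replicate i False = replicate j False @ replicate (Suc k) False"
      using k replicate_add[of j "Suc k" False] by simp
    then show ?thesis by (simp add: dw_def)
  qed
  moreover have "dw j = replicate j False @ [True] @ []" by (simp add: dw_def)
  ultimately show ?thesis using assms(2,3) lex_less_split by metis
qed

lemma dw_disj: "i \<noteq> j \<Longrightarrow> x \<in> cone (dw i) \<Longrightarrow> x \<notin> cone (dw j)"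
proof
  assume "i \<noteq> j" "x \<in> cone (dw i)" "x \<in> cone (dw j)"
  then consider "i < j" | "j < i" by linarith
  then show False
  proof cases
    case 1 then show False using dw_order[OF 1 \<open>x \<in> cone (dw j)\<close> \<open>x \<in> cone (dw i)\<close>] by simp
  next
    case 2 then show False using dw_order[OF 2 \<open>x \<in> cone (dw i)\<close> \<open>x \<in> cone (dw j)\<close>] by simp
  qed
qed

lemma dw_head: "1 \<le> j \<Longrightarrow> x \<in> cone (dw j) \<Longrightarrow> x 0 = False"
  using cone_at[of x "[]" False] dw_Suc by fastforce

lemma TF_not_dw: "1 \<le> j \<Longrightarrow> cat [True, False] y \<notin> cone (dw j)"
proof
  assume "1 \<le> j" "cat [True, False] y \<in> cone (dw j)"
  then have "cat [True, False] y 0 = False" using dw_head by blast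
  then show False by (simp add: cat_def)
qed

lemma dwSuc_not_dw1: "1 \<le> j \<Longrightarrow> cat (dw (Suc j)) y \<notin> cone (dw 1)"
  using dw_disj[of "Suc j" 1 "cat (dw (Suc j)) y"] by simp

lemma gfam_desc:
  "(\<forall>i y. 1 \<le> i \<and> i \<le> length u \<longrightarrow> gfam u (cat (dw i) y) = cat (dw i) (XX (u ! (i - 1)) y)) \<and>
   (\<forall>x. (\<forall>i. 1 \<le> i \<and> i \<le> length u \<longrightarrow> x \<notin> cone (dw i)) \<longrightarrow> gfam u x = x)"
proof (induction u)
  case Nil then show ?case by simp
next
  case (Cons b u)
  have IN: "gfam u (cat (dw i) y) = cat (dw i) (XX (u ! (i - 1)) y)" if "1 \<le> i" "i \<le> length u" for i y
    using Cons.IH that by blast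
  have OUT: "gfam u x = x" if "\<forall>i. 1 \<le> i \<and> i \<le> length u \<longrightarrow> x \<notin> cone (dw i)" for x
    using Cons.IH that by blast
  have ix: "x0 (inv x0 x) = x" for x using bij_x0 by (simp add: bij_is_surj surj_f_inv_f)
  have A: "gfam (b # u) (cat (dw i) y) = cat (dw i) (XX ((b # u) ! (i - 1)) y)"
    if H: "1 \<le> i" "i \<le> length (b # u)" for i y
  proof (cases "i = 1")
    case True
    have "inv x0 (cat (dw i) y) = cat [True, False] y" using True ix0_FT by (simp add: dw1 dw1')
    moreover have "gfam u (cat [True, False] y) = cat [True, False] y" by (rule OUT) (simp add: TF_not_dw)
    ultimately show ?thesis using True x0_TF fe_in[unfolded dw1] by (simp add: dw1 dw1')
  next
    case False
    then obtain j where j: "i = Suc j" "1 \<le> j" "j \<le> length u" using H by (cases i) auto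
    have "gfam (b # u) (cat (dw i) y) = fe b (x0 (gfam u (inv x0 (cat (dw (Suc j)) y))))" using j by simp
    also have "\<dots> = fe b (x0 (cat (dw j) (XX (u ! (j - 1)) y)))" using ix0_dw[OF j(2)] IN[OF j(2,3)] by simp
    also have "\<dots> = cat (dw (Suc j)) (XX (u ! (j - 1)) y)" using x0_dw[OF j(2)] fe_out dwSuc_not_dw1[OF j(2)] by simp
    finally show ?thesis using j by (cases j) auto
  qed
  have B: "gfam (b # u) x = x" if "\<forall>i. 1 \<le> i \<and> i \<le> length (b # u) \<longrightarrow> x \<notin> cone (dw i)" for x
  proof -
    have "inv x0 x \<notin> cone (dw j)" if "1 \<le> j" "j \<le> length u" for j
    proof
      assume "inv x0 x \<in> cone (dw j)"
      then have "inv x0 x = cat (dw j) (sh (length (dw j)) (inv x0 x))" by (simp add: cat_sh)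
      then have "x = cat (dw (Suc j)) (sh (length (dw j)) (inv x0 x))" using x0_dw[OF that(1)] ix by metis
      then have "x \<in> cone (dw (Suc j))" by (metis cat_in_cone)
      then show False using \<open>\<forall>i. 1 \<le> i \<and> i \<le> length (b # u) \<longrightarrow> x \<notin> cone (dw i)\<close> that by auto
    qed
    then have "gfam u (inv x0 x) = inv x0 x" using OUT by blast
    moreover have "x \<notin> cone (dw 1)" using \<open>\<forall>i. 1 \<le> i \<and> i \<le> length (b # u) \<longrightarrow> x \<notin> cone (dw i)\<close> by auto
    ultimately show ?thesis using ix fe_out by simp
  qed
  show ?case using A B by blast
qed

lemma gfam_in: "1 \<le> i \<Longrightarrow> i \<le> length u \<Longrightarrow> gfam u (cat (dw i) y) = cat (dw i) (XX (u ! (i - 1)) y)"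
  using gfam_desc by blast

lemma gfam_out: "(\<And>i. 1 \<le> i \<Longrightarrow> i \<le> length u \<Longrightarrow> x \<notin> cone (dw i)) \<Longrightarrow> gfam u x = x"
  using gfam_desc by blast

lemma fe_G0: "fe b \<in> G0"
  unfolding fe_def using Aw_G0 G0_inv by auto

lemma gfam_G0: "gfam u \<in> G0"
proof (induction u)
  case Nil then show ?case by (metis G0_id gfam.simps(1))
next
  case (Cons b u)
  have "inv x0 \<in> G0" using G0_inv G0_gens(1) by blast
  then show ?case using Cons fe_G0 G0_gens(1) G0_comp by (metis gfam.simps(2))
qed

lemma gfam_T: "gfam u \<in> ThompsonT"
  using gfam_G0 G0_T by blast

section \<open>Conjugacy invariants\<close>

definition sgn :: "(cantor \<Rightarrow> cantor) \<Rightarrow> cantor \<Rightarrow> bool" where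
  "sgn g x \<longleftrightarrow> (\<forall>p. g p = p \<longrightarrow> cyc (g x) x p)"

definition samec :: "(cantor \<Rightarrow> cantor) \<Rightarrow> cantor \<Rightarrow> cantor \<Rightarrow> bool" where
  "samec g x y \<longleftrightarrow> (\<forall>p. g p = p \<longrightarrow> \<not> cyc x p y) \<or> (\<forall>p. g p = p \<longrightarrow> \<not> cyc y p x)"

lemma conj_facts:
  assumes h: "h \<in> ThompsonT" and e: "g' = h \<circ> g \<circ> inv h"
  shows "g' (h x) = h (g x)"
    and "(\<forall>p. g' p = p \<longrightarrow> Q p) \<longleftrightarrow> (\<forall>q. g q = q \<longrightarrow> Q (h q))"
proof -
  have b: "bij h" using inT_bij[OF h] .
  have hi: "h (inv h p) = p" for p using b by (simp add: bij_is_surj surj_f_inv_f)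
  have ih: "inv h (h p) = p" for p using b by (simp add: bij_is_inj)
  show g'h: "g' (h x) = h (g x)" for x using e ih by simp
  show "(\<forall>p. g' p = p \<longrightarrow> Q p) \<longleftrightarrow> (\<forall>q. g q = q \<longrightarrow> Q (h q))"
  proof
    assume a: "\<forall>p. g' p = p \<longrightarrow> Q p"
    show "\<forall>q. g q = q \<longrightarrow> Q (h q)" using a g'h by auto
  next
    assume a: "\<forall>q. g q = q \<longrightarrow> Q (h q)"
    show "\<forall>p. g' p = p \<longrightarrow> Q p"
    proof (intro allI impI)
      fix p assume "g' p = p"
      then have "h (g (inv h p)) = h (inv h p)" using e hi by simp
      then have "g (inv h p) = inv h p" using b by (simp add: bij_is_inj inj_eq)
      then show "Q p" using a hi by metis
    qed
  qed
qed

lemma sgn_conj: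
  assumes h: "h \<in> ThompsonT" and e: "g' = h \<circ> g \<circ> inv h"
  shows "sgn g' (h x) \<longleftrightarrow> sgn g x"
proof -
  have ci: "cyc (h a) (h b) (h c) \<longleftrightarrow> cyc a b c" for a b c
    using cyc_pres_iff[OF bij_is_inj[OF inT_bij[OF h]] inT_cyc[OF h]] .
  have "sgn g' (h x) \<longleftrightarrow> (\<forall>q. g q = q \<longrightarrow> cyc (h (g x)) (h x) (h q))"
    unfolding sgn_def conj_facts(1)[OF h e] by (rule conj_facts(2)[OF h e])
  then show ?thesis unfolding sgn_def ci by simp
qed

lemma samec_conj:
  assumes h: "h \<in> ThompsonT" and e: "g' = h \<circ> g \<circ> inv h"
  shows "samec g' (h x) (h y) \<longleftrightarrow> samec g x y"
proof -
  have ci: "cyc (h a) (h b) (h c) \<longleftrightarrow> cyc a b c" for a b c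
    using cyc_pres_iff[OF bij_is_inj[OF inT_bij[OF h]] inT_cyc[OF h]] .
  have 1: "(\<forall>p. g' p = p \<longrightarrow> \<not> cyc (h x) p (h y)) \<longleftrightarrow> (\<forall>q. g q = q \<longrightarrow> \<not> cyc x q y)"
    using conj_facts(2)[OF h e, of "\<lambda>p. \<not> cyc (h x) p (h y)"] ci by simp
  have 2: "(\<forall>p. g' p = p \<longrightarrow> \<not> cyc (h y) p (h x)) \<longleftrightarrow> (\<forall>q. g q = q \<longrightarrow> \<not> cyc y q x)"
    using conj_facts(2)[OF h e, of "\<lambda>p. \<not> cyc (h y) p (h x)"] ci by simp
  show ?thesis unfolding samec_def 1 2 ..
qed

definition cycR :: "nat \<Rightarrow> nat \<Rightarrow> nat \<Rightarrow> bool" where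
  "cycR i j k \<longleftrightarrow> (j < i \<and> k < j) \<or> (k < j \<and> i < k) \<or> (i < k \<and> j < i)"

lemma gfam_fix_in:
  assumes "gfam u p = p" "p \<in> cone (dw i)" "1 \<le> i" "i \<le> length u"
  shows "p = cat (dw i) zer \<or> p = cat (dw i) one"
proof -
  define y where "y = sh (length (dw i)) p"
  have pe: "p = cat (dw i) y" using assms(2) by (simp add: y_def cat_sh)
  then have "cat (dw i) (XX (u ! (i - 1)) y) = cat (dw i) y" using assms gfam_in by metis
  then have "XX (u ! (i - 1)) y = y" by simp
  then have "y = zer \<or> y = one" using XX_fix_iff by blast
  then show ?thesis using pe by auto
qed

lemma gfam_supp:
  assumes "gfam u x \<noteq> x"
  shows "\<exists>i y. 1 \<le> i \<and> i \<le> length u \<and> x = cat (dw i) y \<and> y \<noteq> zer \<and> y \<noteq> one"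
proof -
  obtain i where i: "1 \<le> i" "i \<le> length u" "x \<in> cone (dw i)"
    using assms gfam_out by blast
  define y where "y = sh (length (dw i)) x"
  have xe: "x = cat (dw i) y" using i(3) by (simp add: y_def cat_sh)
  have "y \<noteq> zer \<and> y \<noteq> one"
  proof (rule ccontr)
    assume "\<not> (y \<noteq> zer \<and> y \<noteq> one)"
    then have "XX (u ! (i - 1)) y = y" using XX_fix_iff by blast
    then have "gfam u x = x" using xe gfam_in[OF i(1,2)] by simp
    then show False using assms by simp
  qed
  then show ?thesis using i xe by blast
qed

lemma gfam_moves:
  assumes "1 \<le> i" "i \<le> length u" "y \<noteq> zer" "y \<noteq> one"
  shows "gfam u (cat (dw i) y) \<noteq> cat (dw i) y"
  using gfam_in[OF assms(1,2)] XX_fix_iff assms(3,4) by simp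

lemma lex_dw_iff:
  assumes "i \<noteq> j" "a \<in> cone (dw i)" "b \<in> cone (dw j)"
  shows "lex_less a b \<longleftrightarrow> j < i"
proof
  assume "lex_less a b"
  show "j < i"
  proof (rule ccontr)
    assume "\<not> j < i"
    then have "i < j" using assms(1) by simp
    then have "lex_less b a" using dw_order assms(2,3) by blast
    then show False using \<open>lex_less a b\<close> lex_less_asym by blast
  qed
qed (use dw_order assms in blast)

lemma sgn_gfam:
  assumes "1 \<le> i" "i \<le> length u" "y \<noteq> zer" "y \<noteq> one"
  shows "sgn (gfam u) (cat (dw i) y) \<longleftrightarrow> u ! (i - 1)"
proof -
  define b where "b = u ! (i - 1)"
  define x where "x = cat (dw i) y"
  have gx: "gfam u x = cat (dw i) (XX b y)" using gfam_in[OF assms(1,2)] by (simp add: x_def b_def)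
  have mv: "(b \<longrightarrow> lex_less (XX b y) y) \<and> (\<not> b \<longrightarrow> lex_less y (XX b y))" using XX_move[OF assms(3,4)] .
  have ne: "XX b y \<noteq> zer" "XX b y \<noteq> one" using XX_ne[OF assms(3,4)] by auto
  show ?thesis
  proof (cases b)
    case True
    have lt: "lex_less (gfam u x) x" using gx mv True by (simp add: x_def)
    have "cyc (gfam u x) x p" if fp: "gfam u p = p" for p
    proof (cases "p \<in> cone (dw i)")
      case True
      then have "p = cat (dw i) zer \<or> p = cat (dw i) one" using gfam_fix_in fp assms by blast
      then show ?thesis
      proof
        assume "p = cat (dw i) zer"
        then have "lex_less p (gfam u x)" using gx ne zer_least by simp
        then show ?thesis using lt by (simp add: cyc_def)
      next
        assume "p = cat (dw i) one"
        then have "lex_less x p" using assms(4) one_greatest by (simp add: x_def)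
        then show ?thesis using lt by (simp add: cyc_def)
      qed
    next
      case False
      have "gfam u x \<in> cone (dw i)" "x \<in> cone (dw i)" using gx by (simp_all add: x_def)
      then show ?thesis using cone_outside[OF False] lt unfolding cyc_def by blast
    qed
    then show ?thesis using True by (simp add: sgn_def x_def b_def)
  next
    case False
    have lt: "lex_less x (gfam u x)" using gx mv False by (simp add: x_def)
    define p where "p = cat (dw i) zer"
    have fp: "gfam u p = p" using gfam_in[OF assms(1,2)] by (simp add: p_def)
    have "lex_less p x" using assms(3) zer_least by (simp add: p_def x_def)
    then have "\<not> cyc (gfam u x) x p" using lt unfolding cyc_def using lex_less_asym by blast
    then show ?thesis using False fp by (auto simp: sgn_def x_def b_def)
  qed
qed

lemma samec_gfam:
  assumes "1 \<le> i" "i \<le> length u" "a \<noteq> zer" "a \<noteq> one"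
    and "1 \<le> j" "j \<le> length u" "b \<noteq> zer" "b \<noteq> one"
  shows "samec (gfam u) (cat (dw i) a) (cat (dw j) b) \<longleftrightarrow> i = j"
proof
  assume "i = j"
  define x where "x = cat (dw i) a"
  define y where "y = cat (dw i) b"
  have nofix: "\<not> cyc x p y" if "gfam u p = p" "lex_less x y" "x \<in> cone (dw i)" "y \<in> cone (dw i)"
    "x \<noteq> cat (dw i) zer" "y \<noteq> cat (dw i) one" for x y p
  proof
    assume c: "cyc x p y"
    then have xp: "lex_less x p" and py: "lex_less p y"
      using that(2) lex_less_asym unfolding cyc_def by blast+
    have pin: "p \<in> cone (dw i)" using cone_interval[OF that(3,4) xp py] .
    then have "p = cat (dw i) zer \<or> p = cat (dw i) one" using gfam_fix_in that(1) assms(1,2) by blast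
    moreover have "lex_less (cat (dw i) zer) x" using cone_min that(3,5) by blast
    moreover have "lex_less y (cat (dw i) one)" using cone_max that(4,6) by blast
    ultimately show False using xp py lex_less_trans lex_less_irrefl by metis
  qed
  have xz: "x \<noteq> cat (dw i) zer" "x \<noteq> cat (dw i) one" using assms(3,4) by (simp_all add: x_def)
  have yz: "y \<noteq> cat (dw i) zer" "y \<noteq> cat (dw i) one" using assms(7,8) by (simp_all add: y_def)
  consider "x = y" | "lex_less x y" | "lex_less y x" using lex_less_total by blast
  then have "samec (gfam u) x y"
  proof cases
    case 1 then show ?thesis unfolding samec_def using cyc_distinct by blast
  next
    case 2 then show ?thesis unfolding samec_def using nofix[of _ x y] xz yz by (simp add: x_def y_def)
  next
    case 3 then show ?thesis unfolding samec_def using nofix[of _ y x] xz yz by (simp add: x_def y_def)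
  qed
  then show "samec (gfam u) (cat (dw i) a) (cat (dw j) b)" using \<open>i = j\<close> by (simp add: x_def y_def)
next
  assume s: "samec (gfam u) (cat (dw i) a) (cat (dw j) b)"
  show "i = j"
  proof (rule ccontr)
    assume ij: "i \<noteq> j"
    have key: "\<not> samec (gfam u) (cat (dw i') a') (cat (dw j') b')"
      if "j' < i'" "1 \<le> i'" "i' \<le> length u" "a' \<noteq> zer" "a' \<noteq> one" "b' \<noteq> zer" "b' \<noteq> one"
      for i' j' a' b'
    proof -
      define x where "x = cat (dw i') a'"
      define y where "y = cat (dw j') b'"
      have xy: "lex_less x y" using dw_order[OF that(1)] by (simp add: x_def y_def)
      define q1 where "q1 = cat (dw i') one"
      define q0 where "q0 = cat (dw i') zer"
      have f1: "gfam u q1 = q1" using gfam_in[OF that(2,3)] by (simp add: q1_def)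
      have f0: "gfam u q0 = q0" using gfam_in[OF that(2,3)] by (simp add: q0_def)
      have "lex_less x q1" using that(5) one_greatest by (simp add: x_def q1_def)
      moreover have "lex_less q1 y" using dw_order[OF that(1)] by (simp add: q1_def y_def)
      ultimately have c1: "cyc x q1 y" by (simp add: cyc_def)
      have "lex_less q0 x" using that(4) zer_least by (simp add: x_def q0_def)
      then have c0: "cyc y q0 x" using xy by (simp add: cyc_def)
      show ?thesis unfolding samec_def using c1 c0 f1 f0 by (auto simp: x_def y_def)
    qed
    show False
    proof (cases "j < i")
      case True then show False using key[of j i a b] s assms by blast
    next
      case False
      then have "i < j" using ij by simp
      moreover have "samec (gfam u) (cat (dw j) b) (cat (dw i) a)" using s unfolding samec_def by blast
      ultimately show False using key[of i j b a] assms by blast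
    qed
  qed
qed

lemma cyc_gfam:
  assumes "i \<noteq> j" "j \<noteq> k" "i \<noteq> k"
  shows "cyc (cat (dw i) a) (cat (dw j) b) (cat (dw k) c) \<longleftrightarrow> cycR i j k"
proof -
  have 1: "lex_less (cat (dw i) a) (cat (dw j) b) \<longleftrightarrow> j < i" using lex_dw_iff assms by simp
  have 2: "lex_less (cat (dw j) b) (cat (dw k) c) \<longleftrightarrow> k < j" using lex_dw_iff assms by simp
  have 3: "lex_less (cat (dw k) c) (cat (dw i) a) \<longleftrightarrow> i < k" using lex_dw_iff assms by simp
  show ?thesis unfolding cyc_def 1 2 3 cycR_def ..
qed

definition midp :: cantor where "midp = cat [True] zer"

lemma midp_ne: "midp \<noteq> zer" "midp \<noteq> one"
proof -
  have a: "midp 0 = True" by (simp add: midp_def cat_def)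
  show "midp \<noteq> zer"
  proof
    assume "midp = zer" then have "midp 0 = False" by (simp add: zer_def fun_eq_iff)
    then show False using a by simp
  qed
  have b: "midp 1 = False" by (simp add: midp_def cat_def zer_def)
  show "midp \<noteq> one"
  proof
    assume "midp = one" then have "midp 1 = True" by (simp add: one_def fun_eq_iff)
    then show False using b by simp
  qed
qed

definition cycpres :: "nat \<Rightarrow> (nat \<Rightarrow> nat) \<Rightarrow> bool" where
  "cycpres n p \<longleftrightarrow> (\<forall>i\<in>{1..n}. p i \<in> {1..n}) \<and> inj_on p {1..n} \<and>
     (\<forall>i\<in>{1..n}. \<forall>j\<in>{1..n}. \<forall>k\<in>{1..n}. cycR i j k \<longrightarrow> cycR (p i) (p j) (p k))"

lemma conj_perm:
  assumes "length u = n" "length v = n" "h \<in> ThompsonT" "gfam v = h \<circ> gfam u \<circ> inv h"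
  shows "\<exists>p. cycpres n p \<and> (\<forall>i\<in>{1..n}. v ! (p i - 1) = u ! (i - 1))"
proof -
  define r where "r i = cat (dw i) midp" for i
  have ex: "\<exists>j y. 1 \<le> j \<and> j \<le> n \<and> h (r i) = cat (dw j) y \<and> y \<noteq> zer \<and> y \<noteq> one"
    if "i \<in> {1..n}" for i
  proof -
    have "gfam v (h (r i)) = h (gfam u (r i))" using conj_facts(1)[OF assms(3,4)] .
    moreover have "gfam u (r i) \<noteq> r i" using gfam_moves midp_ne that assms(1) by (simp add: r_def)
    ultimately have "gfam v (h (r i)) \<noteq> h (r i)" using inT_bij[OF assms(3)] by (metis bij_is_inj injD)
    then show ?thesis using gfam_supp assms(2) by blast
  qed
  define p where "p i = (SOME j. \<exists>y. 1 \<le> j \<and> j \<le> n \<and> h (r i) = cat (dw j) y \<and> y \<noteq> zer \<and> y \<noteq> one)" for i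
  define yy where "yy i = (SOME y. 1 \<le> p i \<and> p i \<le> n \<and> h (r i) = cat (dw (p i)) y \<and> y \<noteq> zer \<and> y \<noteq> one)" for i
  have P: "1 \<le> p i \<and> p i \<le> n \<and> h (r i) = cat (dw (p i)) (yy i) \<and> yy i \<noteq> zer \<and> yy i \<noteq> one"
    if "i \<in> {1..n}" for i
  proof -
    have "\<exists>y. 1 \<le> p i \<and> p i \<le> n \<and> h (r i) = cat (dw (p i)) y \<and> y \<noteq> zer \<and> y \<noteq> one"
      unfolding p_def using someI_ex[OF ex[OF that]] by blast
    then show ?thesis unfolding yy_def by (rule someI_ex)
  qed
  have range: "\<forall>i\<in>{1..n}. p i \<in> {1..n}" using P by auto
  have sgn: "v ! (p i - 1) = u ! (i - 1)" if "i \<in> {1..n}" for i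
  proof -
    have "sgn (gfam v) (h (r i)) \<longleftrightarrow> sgn (gfam u) (r i)" by (rule sgn_conj[OF assms(3,4)])
    moreover have "sgn (gfam u) (r i) \<longleftrightarrow> u ! (i - 1)"
      unfolding r_def using sgn_gfam midp_ne that assms(1) by simp
    moreover have "sgn (gfam v) (h (r i)) \<longleftrightarrow> v ! (p i - 1)"
      using sgn_gfam P[OF that] assms(2) by metis
    ultimately show ?thesis by blast
  qed
  have inj: "inj_on p {1..n}"
  proof (rule inj_onI)
    fix i j assume ij: "i \<in> {1..n}" "j \<in> {1..n}" "p i = p j"
    have "samec (gfam v) (h (r i)) (h (r j))"
      using samec_gfam[of "p i" v "yy i" "p j" "yy j"] P[OF ij(1)] P[OF ij(2)] ij(3) assms(2) by metis
    then have "samec (gfam u) (r i) (r j)" using samec_conj[OF assms(3,4)] by blast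
    then show "i = j" unfolding r_def using samec_gfam midp_ne ij assms(1) by simp
  qed
  have cp: "cycR (p i) (p j) (p k)" if "i \<in> {1..n}" "j \<in> {1..n}" "k \<in> {1..n}" "cycR i j k" for i j k
  proof -
    have d: "i \<noteq> j" "j \<noteq> k" "i \<noteq> k" using that(4) by (auto simp: cycR_def)
    have "cyc (r i) (r j) (r k)" unfolding r_def using cyc_gfam[OF d] that(4) by simp
    then have "cyc (h (r i)) (h (r j)) (h (r k))" using inT_cyc[OF assms(3)] by (simp add: cyc_pres_def)
    moreover have "p i \<noteq> p j" "p j \<noteq> p k" "p i \<noteq> p k" using inj d that(1-3) by (auto dest: inj_onD)
    ultimately show ?thesis using cyc_gfam P[OF that(1)] P[OF that(2)] P[OF that(3)] by metis
  qed
  show ?thesis unfolding cycpres_def using range inj cp sgn by blast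
qed

lemma mono_id:
  fixes f :: "nat \<Rightarrow> nat"
  assumes "\<And>i. a \<le> i \<Longrightarrow> i \<le> b \<Longrightarrow> a \<le> f i \<and> f i \<le> b"
    "\<And>i j. a \<le> i \<Longrightarrow> i < j \<Longrightarrow> j \<le> b \<Longrightarrow> f i < f j"
  shows "a \<le> i \<Longrightarrow> i \<le> b \<Longrightarrow> f i = i"
proof -
  have up: "a + d \<le> b \<Longrightarrow> a + d \<le> f (a + d)" for d
  proof (induction d)
    case 0 then show ?case using assms(1)[of a] by simp
  next
    case (Suc d)
    then have "f (a + d) < f (a + Suc d)" using assms(2)[of "a + d" "a + Suc d"] by simp
    then show ?case using Suc by simp
  qed
  have down: "a + d \<le> b \<Longrightarrow> f (b - d) \<le> b - d" for d
  proof (induction d)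
    case 0 then show ?case using assms(1)[of b] by simp
  next
    case (Suc d)
    then have "f (b - Suc d) < f (b - d)" using assms(2)[of "b - Suc d" "b - d"] by simp
    then show ?case using Suc by simp
  qed
  assume i: "a \<le> i" "i \<le> b"
  have "i \<le> f i" using up[of "i - a"] i by simp
  moreover have "f i \<le> i" using down[of "b - i"] i by simp
  ultimately show "f i = i" by simp
qed

lemma cycR_asym: "cycR a b c \<Longrightarrow> \<not> cycR a c b"
  by (auto simp: cycR_def)

lemma cycR_total: "a \<noteq> b \<Longrightarrow> b \<noteq> c \<Longrightarrow> a \<noteq> c \<Longrightarrow> cycR a b c \<or> cycR a c b"
  by (auto simp: cycR_def)

lemma cycR_distinct: "cycR a b c \<Longrightarrow> a \<noteq> b \<and> b \<noteq> c \<and> a \<noteq> c"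
  by (auto simp: cycR_def)

lemma rot_unique:
  assumes "cycpres n p" "cycpres n q" "p 1 = q 1" "1 \<le> n"
  shows "\<forall>i\<in>{1..n}. p i = q i"
proof -
  define A where "A = {1..n::nat}"
  have qA: "q ` A = A" using assms(2) unfolding cycpres_def A_def
    by (intro endo_inj_surj) auto
  define t where "t = inv_into A q"
  have tq: "t (q i) = i" if "i \<in> A" for i
    using assms(2) that unfolding t_def cycpres_def A_def by (simp add: inv_into_f_f)
  have qt: "q (t a) = a" if "a \<in> A" for a
    using qA that unfolding t_def by (simp add: f_inv_into_f)
  have tA: "t a \<in> A" if "a \<in> A" for a using qA that unfolding t_def by (metis inv_into_into)
  have tcyc: "cycR (t a) (t b) (t c)" if "a \<in> A" "b \<in> A" "c \<in> A" "cycR a b c" for a b c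
  proof -
    have d: "a \<noteq> b" "b \<noteq> c" "a \<noteq> c" using cycR_distinct[OF that(4)] by auto
    then have d': "t a \<noteq> t b" "t b \<noteq> t c" "t a \<noteq> t c" using qt that(1-3) by metis+
    show ?thesis
    proof (rule ccontr)
      assume "\<not> cycR (t a) (t b) (t c)"
      then have "cycR (t a) (t c) (t b)" using cycR_total d' by blast
      then have "cycR (q (t a)) (q (t c)) (q (t b))"
        using assms(2) tA that(1-3) unfolding cycpres_def A_def by blast
      then have "cycR a c b" using qt that(1-3) by simp
      then show False using cycR_asym that(4) by blast
    qed
  qed
  define s where "s i = t (p i)" for i
  have pA: "p i \<in> A" if "i \<in> A" for i using assms(1) that unfolding cycpres_def A_def by blast
  have s1: "s 1 = 1" unfolding s_def using assms(3) tq assms(4) by (simp add: A_def)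
  have sA: "s i \<in> A" if "i \<in> A" for i unfolding s_def using tA pA that by blast
  have scyc: "cycR (s i) (s j) (s k)" if "i \<in> A" "j \<in> A" "k \<in> A" "cycR i j k" for i j k
  proof -
    have "cycR (p i) (p j) (p k)" using assms(1) that unfolding cycpres_def A_def by blast
    then show ?thesis unfolding s_def using tcyc pA that(1-3) by blast
  qed
  have smono: "s i < s j" if "2 \<le> i" "i < j" "j \<le> n" for i j
  proof -
    have "cycR j i 1" using that by (simp add: cycR_def)
    then have "cycR (s j) (s i) (s 1)" using scyc that by (simp add: A_def)
    moreover have "s i \<ge> 1" "s j \<ge> 1" using sA that by (auto simp: A_def)
    ultimately show ?thesis using s1 by (auto simp: cycR_def)
  qed
  have srange: "2 \<le> s i \<and> s i \<le> n" if "2 \<le> i" "i \<le> n" for i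
  proof -
    have "s i \<in> A" using sA that by (simp add: A_def)
    moreover have "s i \<noteq> 1"
    proof
      assume "s i = 1"
      then have "t (p i) = t (p 1)" using s1 by (simp add: s_def)
      then have "p i = p 1" using qt pA that assms(4) by (metis A_def atLeastAtMost_iff le_numeral_extra(4) one_le_numeral order_trans)
      then show False using assms(1) that unfolding cycpres_def by (auto dest: inj_onD)
    qed
    ultimately show ?thesis by (auto simp: A_def)
  qed
  have sid: "s i = i" if "i \<in> A" for i
  proof (cases "i = 1")
    case True then show ?thesis using s1 by simp
  next
    case False
    then have "2 \<le> i" "i \<le> n" using that by (auto simp: A_def)
    then show ?thesis using mono_id[of 2 n s i] srange smono by blast
  qed
  show ?thesis
  proof
    fix i assume i: "i \<in> {1..n}"
    have "t (p i) = i" using sid i by (simp add: s_def A_def)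
    then have "q (t (p i)) = q i" by simp
    then show "p i = q i" using qt pA i by (simp add: A_def)
  qed
qed

definition Cl :: "bool list \<Rightarrow> bool list set" where
  "Cl u = {v. length v = length u \<and> gfam v \<in> conj_class ThompsonT (gfam u)}"

lemma card_Cl:
  assumes "length u = n" "1 \<le> n"
  shows "card (Cl u) \<le> n"
proof -
  have exP: "\<exists>p. cycpres n p \<and> (\<forall>i\<in>{1..n}. v ! (p i - 1) = u ! (i - 1))" if V: "v \<in> Cl u" for v
  proof -
    obtain h where "h \<in> ThompsonT" "gfam v = h \<circ> gfam u \<circ> inv h"
      using V unfolding Cl_def conj_class_def by blast
    then show ?thesis using conj_perm[of u n v h] V assms(1) by (auto simp: Cl_def)
  qed
  define P where "P v = (SOME p. cycpres n p \<and> (\<forall>i\<in>{1..n}. v ! (p i - 1) = u ! (i - 1)))" for v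
  have PP: "cycpres n (P v) \<and> (\<forall>i\<in>{1..n}. v ! (P v i - 1) = u ! (i - 1))" if "v \<in> Cl u" for v
    unfolding P_def using someI_ex[OF exP[OF that]] .
  have "inj_on (\<lambda>v. P v 1) (Cl u)"
  proof (rule inj_onI)
    fix v w assume v: "v \<in> Cl u" and w: "w \<in> Cl u" and e: "P v 1 = P w 1"
    have same: "\<forall>i\<in>{1..n}. P v i = P w i" using rot_unique PP[OF v] PP[OF w] e assms(2) by blast
    have lv: "length v = n" "length w = n" using v w assms(1) by (auto simp: Cl_def)
    have surj: "P v ` {1..n} = {1..n}" using PP[OF v] unfolding cycpres_def
      by (intro endo_inj_surj) auto
    show "v = w"
    proof (rule nth_equalityI)
      show "length v = length w" using lv by simp
      fix t assume "t < length v"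
      then have "Suc t \<in> {1..n}" using lv by simp
      then obtain i where i: "i \<in> {1..n}" "P v i = Suc t" using surj by (metis imageE)
      have "v ! t = u ! (i - 1)" using PP[OF v] i by force
      moreover have "w ! t = u ! (i - 1)" using PP[OF w] i same by force
      ultimately show "v ! t = w ! t" by simp
    qed
  qed
  moreover have "(\<lambda>v. P v 1) ` Cl u \<subseteq> {1..n}" using PP assms(2) unfolding cycpres_def by auto
  ultimately have "card (Cl u) \<le> card {1..n}" by (rule card_inj_on_le) simp
  then show ?thesis by simp
qed

lemma Aw_T: "Aw w \<in> ThompsonT" using Aw_G0 G0_T by blast
lemma invAw_T: "inv (Aw w) \<in> ThompsonT" using Aw_T T_inv by blast
lemma invx0_T: "inv x0 \<in> ThompsonT" using x0_T T_inv by blast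
lemma fe_T: "fe b \<in> ThompsonT" using fe_G0 G0_T by blast

definition KK :: "(cantor \<Rightarrow> cantor) set \<Rightarrow> nat" where
  "KK S = word_length S (Aw [False, True]) + word_length S (inv (Aw [False, True]))
          + word_length S x0 + word_length S (inv x0)"

lemma wl_gfam:
  assumes "generates S ThompsonT"
  shows "word_length S (gfam u) \<le> KK S * length u"
proof (induction u)
  case Nil then show ?case by (metis wl_id gfam.simps(1) le_refl list.size(3) mult_0_right)
next
  case (Cons b u)
  have fe: "word_length S (fe b) \<le> word_length S (Aw [False, True]) + word_length S (inv (Aw [False, True]))"
    by (cases b) (simp_all add: fe_def)
  have T1: "fe b \<circ> x0 \<in> ThompsonT" using T_comp fe_T x0_T by blast
  have T2: "fe b \<circ> x0 \<circ> gfam u \<in> ThompsonT" using T_comp T1 gfam_T by blast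
  have "word_length S (gfam (b # u)) \<le> word_length S (fe b \<circ> x0 \<circ> gfam u) + word_length S (inv x0)"
    using wl_comp[OF assms T2 invx0_T] by simp
  also have "\<dots> \<le> word_length S (fe b \<circ> x0) + word_length S (gfam u) + word_length S (inv x0)"
    using wl_comp[OF assms T1 gfam_T] by simp
  also have "\<dots> \<le> word_length S (fe b) + word_length S x0 + word_length S (gfam u) + word_length S (inv x0)"
    using wl_comp[OF assms fe_T x0_T] by simp
  also have "\<dots> \<le> KK S + KK S * length u" using fe Cons.IH unfolding KK_def by simp
  finally show ?case by (simp del: gfam.simps)
qed

lemma id_conj: "g \<in> conj_class ThompsonT g"
  unfolding conj_class_def using T_id by (intro CollectI exI[of _ id]) simp

lemma lower_n:
  assumes "finite S" "generates S ThompsonT" "1 \<le> n"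
  shows "2 ^ n \<le> n * conj_growth ThompsonT S (KK S * n)"
proof -
  define U where "U = {u :: bool list. length u = n}"
  have UU: "U = {xs. set xs \<subseteq> (UNIV :: bool set) \<and> length xs = n}" by (simp add: U_def)
  have finU: "finite U" unfolding UU by (rule finite_lists_length_eq) simp
  have "card U = card (UNIV :: bool set) ^ n" unfolding UU by (rule card_lists_length_eq) simp
  then have cU: "card U = 2 ^ n" by (simp add: card_UNIV_bool)
  define F where "F u = conj_class ThompsonT (gfam u)" for u
  have a: "card U \<le> n * card (F ` U)"
  proof (rule card_fibers[OF finU])
    fix y assume "y \<in> F ` U"
    then obtain u where u: "u \<in> U" "y = F u" by blast
    have "{x \<in> U. F x = y} \<subseteq> Cl u"
    proof
      fix v assume "v \<in> {x \<in> U. F x = y}"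
      then have "length v = length u" "F v = F u" using u by (auto simp: U_def)
      then show "v \<in> Cl u" using id_conj[of "gfam v"] by (simp add: Cl_def F_def)
    qed
    moreover have "finite (Cl u)"
    proof (rule finite_subset)
      show "Cl u \<subseteq> {xs. set xs \<subseteq> (UNIV :: bool set) \<and> length xs = length u}" by (auto simp: Cl_def)
      show "finite {xs. set xs \<subseteq> (UNIV :: bool set) \<and> length xs = length u}"
        by (rule finite_lists_length_eq) simp
    qed
    ultimately have "card {x \<in> U. F x = y} \<le> card (Cl u)" by (rule card_mono[rotated])
    also have "\<dots> \<le> n" using card_Cl[of u n] u assms(3) by (simp add: U_def)
    finally show "card {x \<in> U. F x = y} \<le> n" .
  qed
  have b: "card (F ` U) \<le> conj_growth ThompsonT S (KK S * n)"
  proof -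
    have "F ` U \<subseteq> conj_class ThompsonT ` ballset S (KK S * n)"
    proof
      fix y assume "y \<in> F ` U"
      then obtain u where u: "u \<in> U" "y = F u" by blast
      have "gfam u \<in> ballset S (KK S * n)"
        using wl_gfam[OF assms(2), of u] gfam_T u by (auto simp: ballset_def U_def)
      then show "y \<in> conj_class ThompsonT ` ballset S (KK S * n)" using u by (simp add: F_def)
    qed
    then have "card (F ` U) \<le> card (conj_class ThompsonT ` ballset S (KK S * n))"
      by (rule card_mono[rotated]) (use finite_ballset[OF assms(1,2)] in simp)
    then show ?thesis by (simp add: conj_growth_eq)
  qed
  from b have "n * card (F ` U) \<le> n * conj_growth ThompsonT S (KK S * n)" by (rule mult_le_mono2)
  with a cU show ?thesis by linarith
qed

lemma lower_growth:
  assumes "finite S" "generates S ThompsonT"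
  shows "growth_le (\<lambda>n. 2 ^ n) (conj_growth ThompsonT S)"
proof -
  define K where "K = KK S"
  define c where "c = 2 * K + 1"
  have "2 ^ n \<le> c * conj_growth ThompsonT S (c * n + c) + c" for n
  proof -
    define m where "m = 2 * n + 2"
    define X where "X = conj_growth ThompsonT S (c * n + c)"
    have "2 ^ m \<le> m * conj_growth ThompsonT S (K * m)"
      using lower_n[OF assms, of m] by (simp add: m_def K_def)
    also have "\<dots> \<le> m * X"
    proof -
      have "K * m \<le> c * n + c" by (simp add: m_def c_def algebra_simps)
      then show ?thesis unfolding X_def using conj_growth_mono[OF assms] by simp
    qed
    also have "\<dots> \<le> 2 ^ (n + 2) * X"
    proof -
      have "n + 1 < 2 ^ (n + 1)" by (rule less_exp)
      then have "m \<le> 2 ^ (n + 2)" by (simp add: m_def)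
      then show ?thesis by simp
    qed
    finally have f: "2 ^ m \<le> 2 ^ (n + 2) * X" .
    have "m = n + (n + 2)" by (simp add: m_def)
    then have "(2::nat) ^ m = 2 ^ (n + 2) * 2 ^ n" by (simp only: power_add mult.commute)
    then have "2 ^ (n + 2) * 2 ^ n \<le> 2 ^ (n + 2) * X" using f by simp
    then have "2 ^ n \<le> X" using mult_le_cancel1[of "2 ^ (n + 2)" "2 ^ n" X] by simp
    also have "\<dots> \<le> c * X + c" by (simp add: c_def)
    finally show ?thesis by (simp add: X_def)
  qed
  then show ?thesis unfolding growth_le_def c_def by (intro exI[of _ "2 * K + 1"]) auto
qed

theorem mainTheorem5:
  shows "(\<exists>S. finite S \<and> generates S ThompsonT) \<and>
         (\<forall>S. finite S \<and> generates S ThompsonT \<longrightarrow>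
              growth_equiv (conj_growth ThompsonT S) (\<lambda>n. 2 ^ n))"
proof
  show "\<exists>S. finite S \<and> generates S ThompsonT" using finite_S0 T_generated by blast
  show "\<forall>S. finite S \<and> generates S ThompsonT \<longrightarrow> growth_equiv (conj_growth ThompsonT S) (\<lambda>n. 2 ^ n)"
    unfolding growth_equiv_def using upper_growth lower_growth by blast
qed

end
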